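(* Assume (A), (R), (S), let $c$ be a global solution of (E) with initial condition in $\ell^1_1$, and let $\mu>\max\{2-\alpha-\beta,1\}$. Set $\rho_\mu=\gamma/(\mu-1)$, $p=(\mu+\gamma-1)/(1+\gamma-\alpha-\beta)$, $q=p/(p-1)$. Then there exists $T>0$ such that for all $t\ge T$ $$\mathfrak m_\mu(t)\le 2\Bigl(\frac{2^{2+\rho_\mu}(2^\mu\mu)^pq^{1-p}}{p}\widehat A_*^{\,p}\widehat{\mathfrak s}_1^{\,1+p+\rho_\mu}+2^{2+\rho_\mu}\widehat{\mathfrak s}_\mu\widehat{\mathfrak s}_1^{\,\rho_\mu}\Bigr)^{\frac1{1+\rho_\mu}}$$ and $$\mathfrak m_\mu(t)\le 4\Bigl(\frac{(2^\mu\mu)^pq^{1-p}}{p}\widehat A_*^{\,p}\widehat{\mathfrak s}_1^{\,1+p}+\widehat{\mathfrak s}_\mu\Bigr).$$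
   Context: Throughout, $\mathbb N=\{1,2,\dots\}$. We consider the forced discrete coagulation equation $$\frac{d}{dt}c_k=\frac12\sum_{\ell=1}^{k-1}a_{k-\ell,\ell}c_{k-\ell}c_\ell-c_k\sum_{\ell=1}^{\infty}a_{k,\ell}c_\ell+s_k-r_kc_k,\qquad k\in\mathbb N,\tag{E}$$ with real coefficients satisfying the standing assumptions: (A) $a_{k,\ell}=a_{\ell,k}$ and $0\le a_{k,\ell}\le A_*(k^\alpha\ell^\beta+k^\beta\ell^\alpha)$ for all $k,\ell\in\mathbb N$, with constants $A_*>0$, $\alpha,\beta\in[0,1]$, $\alpha\le\beta$; (R) $r_k\ge R_*k^\gamma$ for all $k\in\mathbb N$, with $R_*>0$ and $\gamma>\max\{0,\alpha+\beta-1\}$; (S) $s_k\ge 0$ for all $k$, and for every $\mu\ge0$ there is $\mathfrak s_\mu>0$ with $\sum_{k\ge1}k^\mu s_k\le\mathfrak s_\mu$. Write $\widehat A_*=A_*/R_*$ and $\widehat{\mathfrak s}_\mu=\mathfrak s_\mu/R_*$. For $\mu\ge0$, $\ell^1_\mu$ is the set of sequences $(c_k)_{k\in\mathbb N}$ with $c_k\in[0,\infty)$ and $\sum_k k^\mu c_k<\infty$. Solution: a sequence $c=(c_k)_{k\in\mathbb N}$ of continuous functions $c_k:[0,T)\to[0,\infty)$ is a solution of (E) on $[0,T)$ with initial condition $c^{\mathrm{in}}\in\ell^1_1$ if (i) for each $k$, (E) holds for all $t\in(0,T)$; (ii) for each $\mu\ge1$, $c\in L^\infty([0,T),\ell^1_1)\cap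 C^1((0,T),\ell^1_\mu)$; (iii) $c_k(0)=c_k^{\mathrm{in}}$ for all $k$. It is a global solution if $T=\infty$. Moments: $\mathfrak m_\mu(t)=\sum_k k^\mu c_k(t)$. *)

theory Defs
  imports "HOL-Analysis.Analysis"
begin

text \<open>Sequences are indexed by nat; only indices k >= 1 are relevant (the index set is
  the positive integers). Values at index 0 are ignored.\<close>

definition wl1 :: "real \<Rightarrow> (nat \<Rightarrow> real) \<Rightarrow> bool" where
  "wl1 \<mu> x \<longleftrightarrow> (\<lambda>k. real k powr \<mu> * \<bar>x k\<bar>) summable_on {1..}"

definition wnorm :: "real \<Rightarrow> (nat \<Rightarrow> real) \<Rightarrow> real" where
  "wnorm \<mu> x = (\<Sum>\<^sub>\<infinity>k\<in>{1..}. real k powr \<mu> * \<bar>x k\<bar>)"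

definition ell1 :: "real \<Rightarrow> (nat \<Rightarrow> real) \<Rightarrow> bool" where
  "ell1 \<mu> x \<longleftrightarrow> (\<forall>k\<ge>1. 0 \<le> x k) \<and> wl1 \<mu> x"

definition moment :: "real \<Rightarrow> (nat \<Rightarrow> real) \<Rightarrow> real" where
  "moment \<mu> x = (\<Sum>\<^sub>\<infinity>k\<in>{1..}. real k powr \<mu> * x k)"

definition coag_rhs ::
  "(nat \<Rightarrow> nat \<Rightarrow> real) \<Rightarrow> (nat \<Rightarrow> real) \<Rightarrow> (nat \<Rightarrow> real) \<Rightarrow> (nat \<Rightarrow> real) \<Rightarrow> nat \<Rightarrow> real" where
  "coag_rhs a s r x k =
     (1/2) * (\<Sum>l\<in>{1..<k}. a (k - l) l * x (k - l) * x l)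
     - x k * (\<Sum>\<^sub>\<infinity>l\<in>{1..}. a k l * x l) + s k - r k * x k"

definition C1_wl1 :: "real \<Rightarrow> (real \<Rightarrow> nat \<Rightarrow> real) \<Rightarrow> bool" where
  "C1_wl1 \<mu> c \<longleftrightarrow> (\<exists>c'.
     (\<forall>t>0. wl1 \<mu> (c t) \<and> wl1 \<mu> (c' t)) \<and>
     (\<forall>t>0. ((\<lambda>h. wnorm \<mu> (\<lambda>k. c h k - c t k - (h - t) * c' t k) / \<bar>h - t\<bar>) \<longlongrightarrow> 0) (at t)) \<and>
     (\<forall>t>0. ((\<lambda>h. wnorm \<mu> (\<lambda>k. c' h k - c' t k)) \<longlongrightarrow> 0) (at t)))"

definition global_solution ::
  "(nat \<Rightarrow> nat \<Rightarrow> real) \<Rightarrow> (nat \<Rightarrow> real) \<Rightarrow> (nat \<Rightarrow> real) \<Rightarrow> (nat \<Rightarrow> real)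
     \<Rightarrow> (real \<Rightarrow> nat \<Rightarrow> real) \<Rightarrow> bool" where
  "global_solution a s r cin c \<longleftrightarrow>
     (\<forall>k\<ge>1. continuous_on {0..} (\<lambda>t. c t k) \<and> (\<forall>t\<ge>0. 0 \<le> c t k)) \<and>
     (\<forall>k\<ge>1. \<forall>t>0. ((\<lambda>\<tau>. c \<tau> k) has_real_derivative coag_rhs a s r (c t) k) (at t)) \<and>
     (\<exists>M. AE t in lborel. 0 \<le> t \<longrightarrow> ell1 1 (c t) \<and> wnorm 1 (c t) \<le> M) \<and>
     (\<forall>\<mu>\<ge>1. C1_wl1 \<mu> c) \<and>
     (\<forall>k\<ge>1. c 0 k = cin k)"

end

theory Submission
  imports Defs "HOL-Analysis.Analysis"
begin


lemma real_bernoulli: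
  fixes x \<mu> :: real assumes "\<mu> \<ge> 1" "x \<ge> 0"
  shows "1 + \<mu> * x \<le> (1+x) powr \<mu>"
proof -
  have pos: "(1+x) powr \<mu> > 0" using assms by simp
  have "((1+x) powr \<mu>) powr (1/\<mu>) * 1 powr (1 - 1/\<mu>) \<le> (1/\<mu>) * (1+x) powr \<mu> + (1-1/\<mu>) * 1"
    by (rule Youngs_inequality_0) (use assms pos in auto)
  moreover have "((1+x) powr \<mu>) powr (1/\<mu>) = 1 + x" using assms by (simp add: powr_powr)
  ultimately have "1 + x \<le> (1/\<mu>) * (1+x) powr \<mu> + (1-1/\<mu>)" by simp
  then have "\<mu> * (1+x) \<le> \<mu> * ((1/\<mu>) * (1+x) powr \<mu> + (1-1/\<mu>))"
    using assms by (intro mult_left_mono) auto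
  then show ?thesis using assms by (simp add: algebra_simps)
qed

lemma rev_bernoulli:
  fixes y t :: real assumes "0 \<le> t" "t \<le> 1" "y \<ge> 0"
  shows "(1+y) powr t \<le> 1 + t * y"
proof -
  have "(1+y) powr t * 1 powr (1 - t) \<le> t * (1+y) + (1-t) * 1"
    by (rule Youngs_inequality_0) (use assms in auto)
  then show ?thesis by (simp add: algebra_simps)
qed

lemma taylor2:
  fixes x \<mu> :: real assumes "1 \<le> \<mu>" "\<mu> \<le> 2" "x \<ge> 0"
  shows "(1+x) powr \<mu> \<le> 1 + \<mu>*x + \<mu>*(\<mu>-1)/2 * x^2"
proof -
  define f where "f y = 1 + \<mu>*y + \<mu>*(\<mu>-1)/2 * y^2 - (1+y) powr \<mu>" for y
  have d: "DERIV f y :> \<mu> + \<mu>*(\<mu>-1)*y - \<mu> * (1+y) powr (\<mu>-1)" if "y \<ge> 0" for y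
    unfolding f_def using that
    by (auto intro!: derivative_eq_intros simp: field_simps power2_eq_square)
  have "f 0 \<le> f x"
  proof (rule DERIV_nonneg_imp_increasing_open[OF assms(3)])
    fix y assume y: "0 < y" "y < x"
    have "(1+y) powr (\<mu>-1) \<le> 1 + (\<mu>-1) * y" using rev_bernoulli[of "\<mu>-1" y] assms y by auto
    then have "\<mu> * (1+y) powr (\<mu>-1) \<le> \<mu> * (1 + (\<mu>-1) * y)" using assms by (intro mult_left_mono) auto
    then show "\<exists>d. DERIV f y :> d \<and> d \<ge> 0" using d[of y] y by (intro exI[of _ "\<mu> + \<mu>*(\<mu>-1)*y - \<mu> * (1+y) powr (\<mu>-1)"]) (auto simp: algebra_simps)
  next
    show "continuous_on {0..x} f"
      unfolding f_def by (intro continuous_intros) auto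
  qed
  then show ?thesis by (simp add: f_def)
qed

lemma h_nonneg:
  fixes x \<mu> :: real assumes "\<mu> \<ge> 1" "0 \<le> x" "x \<le> 1"
  shows "1 + x powr \<mu> \<le> (1+x) powr \<mu>"
proof -
  have "x powr \<mu> \<le> x"
  proof (cases "x = 0")
    case False then show ?thesis using powr_le_one_le[of x \<mu>] assms by auto
  qed simp
  moreover have "x \<le> \<mu> * x" using assms by (simp add: mult_le_cancel_right1)
  moreover note real_bernoulli[OF assms(1,2)]
  ultimately show ?thesis by linarith
qed

definition gainC :: "real \<Rightarrow> real" where
  "gainC \<mu> = (if \<mu> \<le> 2 then \<mu>^2 else 2 * (2 powr \<mu> - 1))"

lemma gain_real:
  fixes x \<mu> \<alpha> \<beta> :: real
  assumes x: "0 < x" "x \<le> 1" and ab: "0 \<le> \<alpha>" "\<alpha> \<le> \<beta>" "\<beta> \<le> 1" and mu: "\<mu> > 1" "\<alpha> + \<beta> > 2 - \<mu>"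
  shows "(x powr \<alpha> + x powr \<beta>) * ((1+x) powr \<mu> - 1 - x powr \<mu>) \<le> gainC \<mu> * x"
proof -
  have h0: "0 \<le> (1+x) powr \<mu> - 1 - x powr \<mu>" using h_nonneg[of \<mu> x] mu x by auto
  have F0: "0 \<le> x powr \<alpha> + x powr \<beta>" by simp
  have xa: "x powr \<alpha> \<le> 1" "x powr \<beta> \<le> 1" using x ab by (auto intro!: powr_le1)
  show ?thesis
  proof (cases "\<mu> \<le> 2")
    case True
    define k where "k = \<mu>*(\<mu>-1)/2 - 1"
    have "x powr 2 \<le> x powr \<mu>" using powr_mono'[of \<mu> 2 x] True x by auto
    moreover have "x powr 2 = x^2" using x by (simp add: powr_realpow)
    ultimately have x2: "x^2 \<le> x powr \<mu>" by simp
    have "(1+x) powr \<mu> \<le> 1 + \<mu>*x + \<mu>*(\<mu>-1)/2 * x^2" using taylor2[of \<mu> x] True mu x by auto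
    then have hb: "(1+x) powr \<mu> - 1 - x powr \<mu> \<le> x * (\<mu> + k*x)"
      using x2 unfolding k_def by (simp add: algebra_simps power2_eq_square)
    have "(1 - x powr \<alpha>) * (1 - x powr \<beta>) \<ge> 0" using xa by simp
    then have F1: "x powr \<alpha> + x powr \<beta> \<le> 1 + x powr (\<alpha>+\<beta>)" by (simp add: powr_add algebra_simps)
    have F2: "x powr (\<alpha>+\<beta>) \<le> x powr (2-\<mu>)" using powr_mono'[of "2-\<mu>" "\<alpha>+\<beta>" x] mu x by auto
    have "x powr (2-\<mu>) * 1 powr (\<mu>-1) \<le> (2-\<mu>)*x + (\<mu>-1)*1"
      by (rule Youngs_inequality_0) (use x mu True in auto)
    then have F: "x powr \<alpha> + x powr \<beta> \<le> \<mu> + (2-\<mu>)*x" using F1 F2 by simp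
    have "(x powr \<alpha> + x powr \<beta>) * ((1+x) powr \<mu> - 1 - x powr \<mu>) \<le> (\<mu> + (2-\<mu>)*x) * (x * (\<mu> + k*x))"
      by (rule mult_mono[OF F hb]) (use x mu True h0 in \<open>auto intro!: add_nonneg_nonneg mult_nonneg_nonneg\<close>)
    also have "\<dots> = x * (\<mu>^2 + \<mu>*x*((\<mu>-1)*(\<mu>-2)/2) + (2-\<mu>)*k*x^2)"
      unfolding k_def by (simp add: field_simps power2_eq_square)
    also have "\<dots> \<le> x * \<mu>^2"
    proof -
      have "\<mu>*(\<mu>-1) \<le> 2*1" using True mu by (intro mult_mono) auto
      then have "k \<le> 0" unfolding k_def by simp
      have a1: "\<mu>*x*((\<mu>-1)*(\<mu>-2)/2) \<le> 0"
        using mu True x by (intro mult_nonneg_nonpos) (auto intro: mult_nonneg_nonpos)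
      have "(2-\<mu>)*k \<le> 0" using \<open>k \<le> 0\<close> True by (simp add: mult_nonneg_nonpos)
      then have a2: "(2-\<mu>)*k*x^2 \<le> 0" by (simp add: mult_nonpos_nonneg)
      show ?thesis using a1 a2 x by (intro mult_left_mono) auto
    qed
    finally show ?thesis using True by (simp add: gainC_def mult.commute)
  next
    case False
    have "(\<lambda>y. y powr \<mu>) ((1 - x) *\<^sub>R 1 + x *\<^sub>R 2) \<le> (1 - x) * 1 powr \<mu> + x * 2 powr \<mu>"
      by (rule convex_onD[OF powr_convex]) (use x mu in auto)
    then have "(1+x) powr \<mu> \<le> 1 + x * (2 powr \<mu> - 1)" by (simp add: algebra_simps)
    then have hb: "(1+x) powr \<mu> - 1 - x powr \<mu> \<le> x * (2 powr \<mu> - 1)" using powr_ge_zero[of x \<mu>] by linarith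
    have "(x powr \<alpha> + x powr \<beta>) * ((1+x) powr \<mu> - 1 - x powr \<mu>) \<le> 2 * (x * (2 powr \<mu> - 1))"
      by (rule mult_mono) (use xa hb h0 x in auto)
    then show ?thesis using False by (simp add: gainC_def algebra_simps)
  qed
qed

lemma gainC_lt:
  fixes \<mu> :: real assumes "\<mu> > 1"
  shows "gainC \<mu> < 3/4 * (2 powr \<mu> * \<mu>)"
proof (cases "\<mu> \<le> 2")
  case True
  have "1 + \<mu> * 1 \<le> (1+1) powr \<mu>" using real_bernoulli[of \<mu> 1] assms by simp
  then have b: "1 + \<mu> \<le> 2 powr \<mu>" by simp
  have "\<mu> < 3/4 * (1+\<mu>)" using True by simp
  also have "\<dots> \<le> 3/4 * 2 powr \<mu>" using b by simp
  finally have "\<mu> * \<mu> < \<mu> * (3/4 * 2 powr \<mu>)" using assms by simp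
  then show ?thesis using True by (simp add: gainC_def power2_eq_square algebra_simps)
next
  case False
  have "2 powr \<mu> * (2 - 3/4*\<mu>) < 2"
  proof (cases "\<mu> \<ge> 8/3")
    case True
    then have "2 - 3/4*\<mu> \<le> 0" by simp
    then have "2 powr \<mu> * (2 - 3/4*\<mu>) \<le> 0" by (simp add: mult_nonneg_nonpos)
    then show ?thesis by simp
  next
    case F2: False
    have e: "2 powr (2-\<mu>) = exp ((2-\<mu>) * ln 2)" by (simp add: powr_def)
    have "1 + (2-\<mu>) * ln 2 \<le> exp ((2-\<mu>) * ln 2)" by (rule exp_ge_add_one_self)
    moreover have "(\<mu>-2) * ln 2 < (\<mu>-2) * (3/2)" using False ln_2_less_1 by (intro mult_strict_left_mono) auto
    ultimately have "2 - 3/4*\<mu> < 1/2 * 2 powr (2-\<mu>)" using e by (simp add: algebra_simps)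
    moreover have "2 powr \<mu> * 2 powr (2-\<mu>) = 4" by (simp add: powr_add[symmetric])
    ultimately have "2 powr \<mu> * (2 - 3/4*\<mu>) < 2 powr \<mu> * (1/2 * 2 powr (2-\<mu>))"
      by (intro mult_strict_left_mono) auto
    also have "\<dots> = 2" using \<open>2 powr \<mu> * 2 powr (2-\<mu>) = 4\<close> by simp
    finally show ?thesis .
  qed
  then show ?thesis using False by (simp add: gainC_def algebra_simps)
qed

lemma gain_uv_ord:
  fixes u v \<mu> \<alpha> \<beta> :: real
  assumes uv: "0 < v" "v \<le> u" and ab: "0 \<le> \<alpha>" "\<alpha> \<le> \<beta>" "\<beta> \<le> 1" and mu: "\<mu> > 1" "\<alpha> + \<beta> > 2 - \<mu>"
  shows "(u powr \<alpha> * v powr \<beta> + u powr \<beta> * v powr \<alpha>) * ((u+v) powr \<mu> - u powr \<mu> - v powr \<mu>)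
          \<le> gainC \<mu> * (u powr (\<mu>+\<alpha>+\<beta>-1) * v)"
    and "0 \<le> (u+v) powr \<mu> - u powr \<mu> - v powr \<mu>"
proof -
  define x where "x = v / u"
  have u0: "u > 0" using uv by simp
  have x: "0 < x" "x \<le> 1" using uv u0 by (auto simp: x_def)
  have vx: "v = u * x" using u0 by (simp add: x_def)
  have e1: "u powr \<alpha> * v powr \<beta> + u powr \<beta> * v powr \<alpha> = u powr (\<alpha>+\<beta>) * (x powr \<alpha> + x powr \<beta>)"
    unfolding vx powr_mult powr_add by (simp add: algebra_simps)
  have e2: "(u+v) powr \<mu> - u powr \<mu> - v powr \<mu> = u powr \<mu> * ((1+x) powr \<mu> - 1 - x powr \<mu>)"
  proof -
    have "u + v = u * (1+x)" using vx by (simp add: algebra_simps)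
    then have "(u+v) powr \<mu> = u powr \<mu> * (1+x) powr \<mu>" by (simp add: powr_mult)
    moreover have "v powr \<mu> = u powr \<mu> * x powr \<mu>" by (simp add: vx powr_mult)
    ultimately show ?thesis by (simp add: algebra_simps)
  qed
  have e3: "u powr (\<mu>+\<alpha>+\<beta>-1) * v = u powr (\<alpha>+\<beta>) * u powr \<mu> * x"
  proof -
    have "u powr (\<mu>+\<alpha>+\<beta>-1) * u = u powr (\<mu>+\<alpha>+\<beta>)"
      using u0 by (simp add: powr_diff)
    then show ?thesis unfolding vx by (simp add: powr_add algebra_simps)
  qed
  have h0: "0 \<le> (1+x) powr \<mu> - 1 - x powr \<mu>" using h_nonneg[of \<mu> x] mu x by auto
  then show "0 \<le> (u+v) powr \<mu> - u powr \<mu> - v powr \<mu>" unfolding e2 by simp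
  have g: "(x powr \<alpha> + x powr \<beta>) * ((1+x) powr \<mu> - 1 - x powr \<mu>) \<le> gainC \<mu> * x"
    by (rule gain_real) (use x ab mu in auto)
  have "(u powr \<alpha> * v powr \<beta> + u powr \<beta> * v powr \<alpha>) * ((u+v) powr \<mu> - u powr \<mu> - v powr \<mu>)
     = (u powr (\<alpha>+\<beta>) * u powr \<mu>) * ((x powr \<alpha> + x powr \<beta>) * ((1+x) powr \<mu> - 1 - x powr \<mu>))"
    unfolding e1 e2 by (simp add: algebra_simps)
  also have "\<dots> \<le> (u powr (\<alpha>+\<beta>) * u powr \<mu>) * (gainC \<mu> * x)"
    by (rule mult_left_mono[OF g]) simp
  also have "\<dots> = gainC \<mu> * (u powr (\<mu>+\<alpha>+\<beta>-1) * v)" unfolding e3 by (simp add: algebra_simps)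
  finally show "(u powr \<alpha> * v powr \<beta> + u powr \<beta> * v powr \<alpha>) * ((u+v) powr \<mu> - u powr \<mu> - v powr \<mu>)
          \<le> gainC \<mu> * (u powr (\<mu>+\<alpha>+\<beta>-1) * v)" .
qed

lemma gainC_nonneg: "\<mu> > 1 \<Longrightarrow> 0 \<le> gainC \<mu>"
  by (auto simp: gainC_def) (smt (verit) powr_mono powr_one)

lemma gain_uv:
  fixes u v \<mu> \<alpha> \<beta> :: real
  assumes uv: "0 < v" "0 < u" and ab: "0 \<le> \<alpha>" "\<alpha> \<le> \<beta>" "\<beta> \<le> 1" and mu: "\<mu> > 1" "\<alpha> + \<beta> > 2 - \<mu>"
  shows "(u powr \<alpha> * v powr \<beta> + u powr \<beta> * v powr \<alpha>) * ((u+v) powr \<mu> - u powr \<mu> - v powr \<mu>)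
          \<le> gainC \<mu> * (u powr (\<mu>+\<alpha>+\<beta>-1) * v + u * v powr (\<mu>+\<alpha>+\<beta>-1))"
    and "0 \<le> (u+v) powr \<mu> - u powr \<mu> - v powr \<mu>"
proof -
  have G: "0 \<le> gainC \<mu>" using gainC_nonneg mu by simp
  show "0 \<le> (u+v) powr \<mu> - u powr \<mu> - v powr \<mu>"
  proof (cases "v \<le> u")
    case True then show ?thesis using gain_uv_ord(2)[of v u \<alpha> \<beta> \<mu>] uv ab mu by auto
  next
    case False then show ?thesis using gain_uv_ord(2)[of u v \<alpha> \<beta> \<mu>] uv ab mu by (auto simp: add.commute)
  qed
  show "(u powr \<alpha> * v powr \<beta> + u powr \<beta> * v powr \<alpha>) * ((u+v) powr \<mu> - u powr \<mu> - v powr \<mu>)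
          \<le> gainC \<mu> * (u powr (\<mu>+\<alpha>+\<beta>-1) * v + u * v powr (\<mu>+\<alpha>+\<beta>-1))"
  proof (cases "v \<le> u")
    case True
    have "0 \<le> gainC \<mu> * (u * v powr (\<mu>+\<alpha>+\<beta>-1))" using G uv by simp
    then show ?thesis using gain_uv_ord(1)[of v u \<alpha> \<beta> \<mu>] uv ab mu True by (simp add: algebra_simps)
  next
    case False
    have "0 \<le> gainC \<mu> * (u powr (\<mu>+\<alpha>+\<beta>-1) * v)" using G uv by simp
    moreover have "(v powr \<alpha> * u powr \<beta> + v powr \<beta> * u powr \<alpha>) * ((v+u) powr \<mu> - v powr \<mu> - u powr \<mu>)
          \<le> gainC \<mu> * (v powr (\<mu>+\<alpha>+\<beta>-1) * u)" using gain_uv_ord(1)[of u v \<alpha> \<beta> \<mu>] uv ab mu False by auto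
    ultimately show ?thesis by (simp add: algebra_simps)
  qed
qed

lemma holder_fin:
  fixes f g :: "'a \<Rightarrow> real"
  assumes I: "finite I" and fg: "\<And>k. k \<in> I \<Longrightarrow> 0 \<le> f k" "\<And>k. k \<in> I \<Longrightarrow> 0 \<le> g k"
    and th: "0 < \<theta>" "\<theta> < 1"
  shows "(\<Sum>k\<in>I. f k powr (1-\<theta>) * g k powr \<theta>) \<le> (\<Sum>k\<in>I. f k) powr (1-\<theta>) * (\<Sum>k\<in>I. g k) powr \<theta>"
proof -
  define F where "F = (\<Sum>k\<in>I. f k)"
  define G where "G = (\<Sum>k\<in>I. g k)"
  have F0: "F \<ge> 0" "G \<ge> 0" unfolding F_def G_def using fg by (auto intro: sum_nonneg)
  show ?thesis
  proof (cases "F = 0 \<or> G = 0")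
    case True
    then have "\<forall>k\<in>I. f k = 0 \<or> g k = 0" using sum_nonneg_eq_0_iff[OF I] fg unfolding F_def G_def by blast
    then have "(\<Sum>k\<in>I. f k powr (1-\<theta>) * g k powr \<theta>) = 0" by (intro sum.neutral) auto
    then show ?thesis by simp
  next
    case False
    then have Fp: "F > 0" "G > 0" using F0 by auto
    have "f k powr (1-\<theta>) * g k powr \<theta> \<le> F powr (1-\<theta>) * G powr \<theta> * ((1-\<theta>) * (f k / F) + \<theta> * (g k / G))"
      if k: "k \<in> I" for k
    proof (cases "f k = 0 \<or> g k = 0")
      case True
      have "0 \<le> F powr (1-\<theta>) * G powr \<theta> * ((1-\<theta>) * (f k / F) + \<theta> * (g k / G))"
        using fg[OF k] Fp th by (intro mult_nonneg_nonneg add_nonneg_nonneg) auto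
      then show ?thesis using True by auto
    next
      case False
      then have p: "f k > 0" "g k > 0" using fg[OF k] by auto
      have "(f k / F) powr (1-\<theta>) * (g k / G) powr \<theta> \<le> (1-\<theta>) * (f k / F) + \<theta> * (g k / G)"
        by (rule Youngs_inequality_0) (use p Fp th in auto)
      then have "F powr (1-\<theta>) * G powr \<theta> * ((f k / F) powr (1-\<theta>) * (g k / G) powr \<theta>)
          \<le> F powr (1-\<theta>) * G powr \<theta> * ((1-\<theta>) * (f k / F) + \<theta> * (g k / G))"
        by (intro mult_left_mono) auto
      moreover have "F powr (1-\<theta>) * G powr \<theta> * ((f k / F) powr (1-\<theta>) * (g k / G) powr \<theta>)
          = f k powr (1-\<theta>) * g k powr \<theta>"
        using p Fp by (simp add: powr_divide)
      ultimately show ?thesis by simp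
    qed
    then have "(\<Sum>k\<in>I. f k powr (1-\<theta>) * g k powr \<theta>) \<le>
        (\<Sum>k\<in>I. F powr (1-\<theta>) * G powr \<theta> * ((1-\<theta>) * (f k / F) + \<theta> * (g k / G)))"
      by (rule sum_mono)
    also have "\<dots> = F powr (1-\<theta>) * G powr \<theta> * ((1-\<theta>) * (F / F) + \<theta> * (G / G))"
      unfolding sum_distrib_left[symmetric] sum.distrib sum_divide_distrib[symmetric]
        F_def[symmetric] G_def[symmetric] by simp
    also have "\<dots> = F powr (1-\<theta>) * G powr \<theta>" using Fp by simp
    finally show ?thesis unfolding F_def G_def .
  qed
qed

lemma interp_fin:
  fixes c :: "nat \<Rightarrow> real"
  assumes I: "finite I" "\<And>k. k \<in> I \<Longrightarrow> k \<ge> 1" and c: "\<And>k. k \<in> I \<Longrightarrow> 0 \<le> c k"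
    and th: "0 < \<theta>" "\<theta> < 1"
  shows "(\<Sum>k\<in>I. real k powr ((1-\<theta>) + \<theta>*w) * c k) \<le>
     (\<Sum>k\<in>I. real k * c k) powr (1-\<theta>) * (\<Sum>k\<in>I. real k powr w * c k) powr \<theta>"
proof -
  have eq: "real k powr ((1-\<theta>) + \<theta>*w) * c k = (real k * c k) powr (1-\<theta>) * (real k powr w * c k) powr \<theta>"
    if k: "k \<in> I" for k
  proof (cases "c k = 0")
    case True then show ?thesis using th by simp
  next
    case False
    then have ck: "c k > 0" using c[OF k] by simp
    have k0: "real k > 0" using I(2)[OF k] by simp
    have "(real k * c k) powr (1-\<theta>) * (real k powr w * c k) powr \<theta>
        = real k powr (1-\<theta>) * real k powr (w*\<theta>) * (c k powr (1-\<theta>) * c k powr \<theta>)"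
      by (simp add: powr_mult powr_powr algebra_simps)
    also have "\<dots> = real k powr ((1-\<theta>) + \<theta>*w) * c k"
      using ck k0 by (simp add: powr_add[symmetric] algebra_simps)
    finally show ?thesis by simp
  qed
  have "(\<Sum>k\<in>I. real k powr ((1-\<theta>) + \<theta>*w) * c k) =
      (\<Sum>k\<in>I. (real k * c k) powr (1-\<theta>) * (real k powr w * c k) powr \<theta>)"
    using eq by (rule sum.cong[OF refl])
  also have "\<dots> \<le> (\<Sum>k\<in>I. real k * c k) powr (1-\<theta>) * (\<Sum>k\<in>I. real k powr w * c k) powr \<theta>"
    by (rule holder_fin) (use I c th in auto)
  finally show ?thesis .
qed

lemma decr_lin:
  fixes f f' :: "real \<Rightarrow> real"
  assumes "a \<le> b" and d: "\<And>t. a \<le> t \<Longrightarrow> t \<le> b \<Longrightarrow> (f has_real_derivative f' t) (at t)"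
    and n: "\<And>t. a < t \<Longrightarrow> t < b \<Longrightarrow> f' t \<le> -\<delta>"
  shows "f b \<le> f a - \<delta> * (b - a)"
proof -
  define g where "g t = f t + \<delta> * t" for t
  have "g b \<le> g a"
  proof (rule DERIV_nonpos_imp_decreasing_open[OF assms(1)])
    fix t assume t: "a < t" "t < b"
    have "(g has_real_derivative f' t + \<delta>) (at t)" unfolding g_def
      using d[of t] t by (auto intro!: derivative_eq_intros)
    then show "\<exists>y. (g has_real_derivative y) (at t) \<and> y \<le> 0" using n[OF t] by auto
  next
    have "continuous_on {a..b} f" by (rule DERIV_continuous_on[where D=f']) (use d in \<open>auto intro: has_field_derivative_at_within\<close>)
    then show "continuous_on {a..b} g" unfolding g_def by (intro continuous_intros)
  qed
  then show ?thesis by (simp add: g_def algebra_simps)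
qed

lemma eventually_le_ode:
  fixes f f' :: "real \<Rightarrow> real"
  assumes d: "\<And>t. t \<ge> t0 \<Longrightarrow> (f has_real_derivative f' t) (at t)"
    and n: "\<And>t. t \<ge> t0 \<Longrightarrow> f t \<ge> K \<Longrightarrow> f' t \<le> -\<delta>" and \<delta>: "\<delta> > 0"
  shows "\<exists>T\<ge>t0. \<forall>t\<ge>T. f t \<le> K"
proof -
  have cont: "continuous_on {a..b} f" if "t0 \<le> a" for a b
    by (rule DERIV_continuous_on[where D=f']) (use d that in \<open>auto intro: has_field_derivative_at_within\<close>)
  have ex: "\<exists>s\<ge>t0. f s \<le> K"
  proof (rule ccontr)
    assume "\<not> ?thesis"
    then have gt: "\<And>s. s \<ge> t0 \<Longrightarrow> f s > K" by force
    define L where "L = (f t0 - K) / \<delta> + 1"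
    have L0: "L \<ge> 0" using gt[of t0] \<delta> by (simp add: L_def)
    have "f (t0 + L) \<le> f t0 - \<delta> * ((t0 + L) - t0)"
      by (rule decr_lin[where f'=f']) (use L0 d n gt in \<open>auto simp: less_imp_le\<close>)
    also have "\<dots> = K - \<delta>" using \<delta> by (simp add: L_def field_simps)
    finally show False using gt[of "t0+L"] L0 \<delta> by simp
  qed
  then obtain s where s: "s \<ge> t0" "f s \<le> K" by blast
  have "f t \<le> K" if t: "t \<ge> s" for t
  proof (rule ccontr)
    assume ft: "\<not> f t \<le> K"
    define S where "S = {s..t} \<inter> f -` {..K}"
    have cS: "closed S" unfolding S_def by (rule continuous_closed_preimage) (use cont s in auto)
    have sS: "s \<in> S" using s t by (auto simp: S_def)
    have bS: "bdd_above S" unfolding S_def by (auto intro: bdd_aboveI[of _ t])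
    define \<tau> where "\<tau> = Sup S"
    have \<tau>S: "\<tau> \<in> S" unfolding \<tau>_def using closed_contains_Sup[of S] cS sS bS by auto
    have \<tau>t: "s \<le> \<tau>" "\<tau> \<le> t" "f \<tau> \<le> K" using \<tau>S by (auto simp: S_def)
    have above: "f x > K" if "\<tau> < x" "x \<le> t" for x
    proof (rule ccontr)
      assume "\<not> f x > K"
      then have "x \<in> S" using that \<tau>t by (auto simp: S_def)
      then have "x \<le> \<tau>" unfolding \<tau>_def using bS by (rule cSup_upper)
      then show False using that by simp
    qed
    have "\<tau> < t" using \<tau>t ft by (cases "\<tau> = t") auto
    have "f t \<le> f \<tau> - \<delta> * (t - \<tau>)"
      by (rule decr_lin[where f'=f']) (use \<tau>t s d n above in \<open>auto simp: less_imp_le\<close>)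
    then show False using \<tau>t \<delta> \<open>\<tau> < t\<close> ft by (smt (verit) mult_pos_pos)
  qed
  then show ?thesis using s by blast
qed



lemma partial_tendsto:
  fixes f :: "nat \<Rightarrow> real"
  assumes "f summable_on {1..}"
  shows "(\<lambda>N. \<Sum>k\<in>{1..N}. f k) \<longlonglongrightarrow> infsum f {1..}"
proof -
  define g where "g k = (if k \<ge> 1 then f k else 0)" for k
  have "(f has_sum infsum f {1..}) {1..}" using assms by (simp add: has_sum_infsum)
  then have "(g has_sum infsum f {1..}) UNIV"
    using has_sum_cong_neutral[of UNIV "{1..}" g f] by (auto simp: g_def)
  then have "g sums infsum f {1..}" by (rule has_sum_imp_sums)
  then have "(\<lambda>n. sum g {..<n}) \<longlonglongrightarrow> infsum f {1..}" by (simp add: sums_def)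
  then have "(\<lambda>n. sum g {..<Suc n}) \<longlonglongrightarrow> infsum f {1..}" by (rule LIMSEQ_Suc)
  moreover have "sum g {..<Suc n} = (\<Sum>k\<in>{1..n}. f k)" for n
  proof -
    have "sum g {..<Suc n} = sum g {1..n} + g 0"
    proof -
      have "{..<Suc n} = insert 0 {1..n}" by auto
      then show ?thesis by simp
    qed
    then show ?thesis by (simp add: g_def)
  qed
  ultimately show ?thesis by simp
qed

lemma partial_le:
  fixes f :: "nat \<Rightarrow> real"
  assumes "f summable_on A" "\<And>k. k \<in> A \<Longrightarrow> f k \<ge> 0" "finite F" "F \<subseteq> A"
  shows "sum f F \<le> infsum f A"
proof -
  have "infsum f F \<le> infsum f A"
    by (rule infsum_mono_neutral) (use assms in auto)
  then show ?thesis using assms by simp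
qed

lemma wl1_single:
  assumes "wl1 \<nu> x" "k \<ge> 1"
  shows "real k powr \<nu> * \<bar>x k\<bar> \<le> wnorm \<nu> x"
  using partial_le[of "\<lambda>k. real k powr \<nu> * \<bar>x k\<bar>" "{1..}" "{k}"] assms
  by (auto simp: wl1_def wnorm_def)

lemma wl1_lin:
  assumes "wl1 \<nu> x" "wl1 \<nu> y"
  shows "wl1 \<nu> (\<lambda>k. x k - y k - b * z k) \<or> \<not> wl1 \<nu> z"
proof (cases "wl1 \<nu> z")
  case True
  have s: "(\<lambda>k. real k powr \<nu> * \<bar>x k\<bar> + real k powr \<nu> * \<bar>y k\<bar> + \<bar>b\<bar> * (real k powr \<nu> * \<bar>z k\<bar>)) summable_on {1..}"
    using assms True unfolding wl1_def by (intro summable_on_add summable_on_cmult_right) auto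
  have "(\<lambda>k. real k powr \<nu> * \<bar>x k - y k - b * z k\<bar>) summable_on {1..}"
  proof (rule summable_on_comparison_test[OF s])
    fix k :: nat
    have "\<bar>x k - y k - b * z k\<bar> \<le> \<bar>x k\<bar> + \<bar>y k\<bar> + \<bar>b\<bar> * \<bar>z k\<bar>" by (simp add: abs_mult[symmetric]; linarith)
    then have "real k powr \<nu> * \<bar>x k - y k - b * z k\<bar> \<le> real k powr \<nu> * (\<bar>x k\<bar> + \<bar>y k\<bar> + \<bar>b\<bar> * \<bar>z k\<bar>)"
      by (rule mult_left_mono) simp
    then show "real k powr \<nu> * \<bar>x k - y k - b * z k\<bar> \<le> real k powr \<nu> * \<bar>x k\<bar> + real k powr \<nu> * \<bar>y k\<bar> + \<bar>b\<bar> * (real k powr \<nu> * \<bar>z k\<bar>)"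
      by (simp add: algebra_simps)
  qed simp
  then show ?thesis by (simp add: wl1_def)
qed simp

lemma wl1_summable:
  assumes "wl1 \<nu> x"
  shows "(\<lambda>k. real k powr \<nu> * x k) summable_on {1..}"
proof -
  have "(\<lambda>k. norm (real k powr \<nu> * x k)) summable_on {1..}"
    using assms unfolding wl1_def by (simp add: abs_mult)
  then show ?thesis using summable_on_iff_abs_summable_on_real by blast
qed

lemma wl1_abs_infsum:
  assumes "wl1 \<nu> x"
  shows "\<bar>infsum (\<lambda>k. real k powr \<nu> * x k) {1..}\<bar> \<le> wnorm \<nu> x"
proof -
  have "(\<lambda>k. norm (real k powr \<nu> * x k)) summable_on {1..}"
    using assms unfolding wl1_def by (simp add: abs_mult)
  from norm_infsum_bound[OF this] show ?thesis by (simp add: wnorm_def abs_mult)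
qed

lemma infsum_lin3:
  fixes f g h :: "nat \<Rightarrow> real"
  assumes "f summable_on A" "g summable_on A" "h summable_on A"
  shows "infsum (\<lambda>k. f k - g k - b * h k) A = infsum f A - infsum g A - b * infsum h A"
proof -
  have "((\<lambda>k. f k + (- g k) + (- (b * h k))) has_sum (infsum f A + (- infsum g A) + (- (b * infsum h A)))) A"
    using assms by (intro has_sum_add has_sum_uminus[THEN iffD2] has_sum_cmult_right has_sum_infsum) (auto intro: has_sum_cmult_right has_sum_infsum)
  then show ?thesis by (simp add: infsumI)
qed

lemma C1_moment_deriv:
  fixes c :: "real \<Rightarrow> nat \<Rightarrow> real"
  assumes C1: "C1_wl1 \<nu> c"
   and nn: "\<And>t k. t \<ge> 0 \<Longrightarrow> k \<ge> 1 \<Longrightarrow> 0 \<le> c t k"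
   and der: "\<And>t k. t > 0 \<Longrightarrow> k \<ge> 1 \<Longrightarrow> ((\<lambda>\<tau>. c \<tau> k) has_real_derivative F t k) (at t)"
   and t: "t > 0"
  shows "((\<lambda>\<tau>. moment \<nu> (c \<tau>)) has_real_derivative infsum (\<lambda>k. real k powr \<nu> * F t k) {1..}) (at t)"
    and "(\<lambda>k. real k powr \<nu> * F t k) summable_on {1..}"
    and "wl1 \<nu> (c t)"
proof -
  obtain c' where W: "\<And>t. t > 0 \<Longrightarrow> wl1 \<nu> (c t) \<and> wl1 \<nu> (c' t)"
    and L: "\<And>t. t > 0 \<Longrightarrow> ((\<lambda>h. wnorm \<nu> (\<lambda>k. c h k - c t k - (h - t) * c' t k) / \<bar>h - t\<bar>) \<longlongrightarrow> 0) (at t)"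
    using C1 unfolding C1_wl1_def by blast
  define Dh where "Dh h = (\<lambda>k. c h k - c t k - (h - t) * c' t k)" for h
  have Lt: "((\<lambda>h. wnorm \<nu> (Dh h) / \<bar>h - t\<bar>) \<longlongrightarrow> 0) (at t)" using L[OF t] by (simp add: Dh_def)
  have evp: "eventually (\<lambda>h. h > 0 \<and> h \<noteq> t) (at t)"
  proof -
    have "eventually (\<lambda>h. 0 < h) (at t)" using order_tendstoD(1)[OF tendsto_ident_at t] .
    moreover have "eventually (\<lambda>h. h \<noteq> t) (at t)" by (simp add: eventually_at_filter)
    ultimately show ?thesis by eventually_elim auto
  qed
  have wD: "wl1 \<nu> (Dh h)" if "h > 0" for h
    using wl1_lin[of \<nu> "c h" "c t" "h - t" "c' t"] W[OF that] W[OF t] by (auto simp: Dh_def)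
  show "wl1 \<nu> (c t)" using W[OF t] by simp
  have coord: "c' t k = F t k" if k: "k \<ge> 1" for k
  proof -
    have "((\<lambda>h. (c h k - c t k) / (h - t) - c' t k) \<longlongrightarrow> 0) (at t)"
    proof (rule Lim_null_comparison)
      show "((\<lambda>h. wnorm \<nu> (Dh h) / \<bar>h - t\<bar> / real k powr \<nu>) \<longlongrightarrow> 0) (at t)"
        using tendsto_divide_zero[OF Lt] by simp
      show "\<forall>\<^sub>F h in at t. norm ((c h k - c t k) / (h - t) - c' t k) \<le> wnorm \<nu> (Dh h) / \<bar>h - t\<bar> / real k powr \<nu>"
        using evp
      proof eventually_elim
        case (elim h)
        have kp: "real k powr \<nu> > 0" using k by simp
        have "real k powr \<nu> * \<bar>Dh h k\<bar> \<le> wnorm \<nu> (Dh h)" using wl1_single[OF wD k] elim by simp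
        then have "\<bar>Dh h k\<bar> \<le> wnorm \<nu> (Dh h) / real k powr \<nu>" using kp by (simp add: field_simps)
        then have "\<bar>Dh h k\<bar> / \<bar>h - t\<bar> \<le> wnorm \<nu> (Dh h) / real k powr \<nu> / \<bar>h - t\<bar>"
          by (rule divide_right_mono) simp
        moreover have "(c h k - c t k) / (h - t) - c' t k = Dh h k / (h - t)"
          using elim by (simp add: Dh_def field_simps)
        ultimately show ?case by (simp add: abs_divide field_simps)
      qed
    qed
    then have "((\<lambda>h. (c h k - c t k) / (h - t)) \<longlongrightarrow> c' t k) (at t)" by (rule LIM_zero_cancel)
    then have "((\<lambda>\<tau>. c \<tau> k) has_real_derivative c' t k) (at t)" by (simp add: has_field_derivative_iff)
    then show ?thesis using der[OF t k] by (rule DERIV_unique)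
  qed
  have sc': "(\<lambda>k. real k powr \<nu> * c' t k) summable_on {1..}" using W[OF t] wl1_summable by blast
  have eqD: "infsum (\<lambda>k. real k powr \<nu> * F t k) {1..} = infsum (\<lambda>k. real k powr \<nu> * c' t k) {1..}"
    by (rule infsum_cong) (simp add: coord)
  show "(\<lambda>k. real k powr \<nu> * F t k) summable_on {1..}"
    using sc' by (subst summable_on_cong[where g="\<lambda>k. real k powr \<nu> * c' t k"]) (auto simp: coord)
  define D where "D = infsum (\<lambda>k. real k powr \<nu> * c' t k) {1..}"
  have mom: "moment \<nu> (c h) = infsum (\<lambda>k. real k powr \<nu> * c h k) {1..}" for h by (simp add: moment_def)
  have "((\<lambda>h. (moment \<nu> (c h) - moment \<nu> (c t)) / (h - t) - D) \<longlongrightarrow> 0) (at t)"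
  proof (rule Lim_null_comparison)
    show "((\<lambda>h. wnorm \<nu> (Dh h) / \<bar>h - t\<bar>) \<longlongrightarrow> 0) (at t)" by (rule Lt)
    show "\<forall>\<^sub>F h in at t. norm ((moment \<nu> (c h) - moment \<nu> (c t)) / (h - t) - D) \<le> wnorm \<nu> (Dh h) / \<bar>h - t\<bar>"
      using evp
    proof eventually_elim
      case (elim h)
      have "infsum (\<lambda>k. real k powr \<nu> * Dh h k) {1..} =
          infsum (\<lambda>k. real k powr \<nu> * c h k - real k powr \<nu> * c t k - (h - t) * (real k powr \<nu> * c' t k)) {1..}"
        by (rule infsum_cong) (simp add: Dh_def algebra_simps)
      also have "\<dots> = moment \<nu> (c h) - moment \<nu> (c t) - (h - t) * D"
        unfolding mom D_def
        by (rule infsum_lin3) (use W[OF t] W[of h] elim wl1_summable in auto)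
      finally have e: "infsum (\<lambda>k. real k powr \<nu> * Dh h k) {1..} = moment \<nu> (c h) - moment \<nu> (c t) - (h - t) * D" .
      have "\<bar>moment \<nu> (c h) - moment \<nu> (c t) - (h - t) * D\<bar> \<le> wnorm \<nu> (Dh h)"
        using wl1_abs_infsum[OF wD[of h]] elim e by simp
      then have "\<bar>moment \<nu> (c h) - moment \<nu> (c t) - (h - t) * D\<bar> / \<bar>h - t\<bar> \<le> wnorm \<nu> (Dh h) / \<bar>h - t\<bar>"
        by (simp add: divide_right_mono)
      moreover have "(moment \<nu> (c h) - moment \<nu> (c t)) / (h - t) - D = (moment \<nu> (c h) - moment \<nu> (c t) - (h - t) * D) / (h - t)"
        using elim by (simp add: field_simps)
      ultimately show ?case by (simp add: abs_divide)
    qed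
  qed
  then have "((\<lambda>h. (moment \<nu> (c h) - moment \<nu> (c t)) / (h - t)) \<longlongrightarrow> D) (at t)" by (rule LIM_zero_cancel)
  then show "((\<lambda>\<tau>. moment \<nu> (c \<tau>)) has_real_derivative infsum (\<lambda>k. real k powr \<nu> * F t k) {1..}) (at t)"
    unfolding eqD has_field_derivative_iff D_def .
qed



definition TN :: "nat \<Rightarrow> (nat \<times> nat) set" where
  "TN N = {(i,j). 1 \<le> i \<and> 1 \<le> j \<and> i + j \<le> N}"

lemma TN_finite: "finite (TN N)"
proof -
  have "TN N \<subseteq> {1..N} \<times> {1..N}" by (auto simp: TN_def)
  then show ?thesis by (rule finite_subset) simp
qed

lemma gain_reindex:
  fixes F :: "nat \<Rightarrow> nat \<Rightarrow> real"
  shows "(\<Sum>k\<in>{1..N}. \<Sum>l\<in>{1..<k}. F (k - l) l) = (\<Sum>(i,j)\<in>TN N. F i j)"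
proof -
  have "(\<Sum>k\<in>{1..N}. \<Sum>l\<in>{1..<k}. F (k - l) l) = (\<Sum>(k,l)\<in>Sigma {1..N} (\<lambda>k. {1..<k}). F (k - l) l)"
    by (rule sum.Sigma) auto
  also have "\<dots> = (\<Sum>(i,j)\<in>TN N. F i j)"
    by (rule sum.reindex_bij_witness[where i="\<lambda>(i,j). (i+j, j)" and j="\<lambda>(k,l). (k-l, l)"])
       (auto simp: TN_def)
  finally show ?thesis .
qed

lemma loss_reindex:
  fixes F :: "nat \<Rightarrow> nat \<Rightarrow> real"
  shows "(\<Sum>k\<in>{1..N}. \<Sum>l\<in>{1..N-k}. F k l) = (\<Sum>(i,j)\<in>TN N. F i j)"
proof -
  have "(\<Sum>k\<in>{1..N}. \<Sum>l\<in>{1..N-k}. F k l) = (\<Sum>(k,l)\<in>Sigma {1..N} (\<lambda>k. {1..N-k}). F k l)"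
    by (rule sum.Sigma) auto
  also have "Sigma {1..N} (\<lambda>k. {1..N-k}) = TN N" by (auto simp: TN_def)
  finally show ?thesis by simp
qed

lemma swap_reindex:
  fixes F :: "nat \<Rightarrow> nat \<Rightarrow> real"
  shows "(\<Sum>(i,j)\<in>TN N. F i j) = (\<Sum>(i,j)\<in>TN N. F j i)"
  by (rule sum.reindex_bij_witness[where i="\<lambda>(i,j). (j,i)" and j="\<lambda>(i,j). (j,i)"]) (auto simp: TN_def)

lemma trunc_ineq:
  fixes x :: "nat \<Rightarrow> real" and a :: "nat \<Rightarrow> nat \<Rightarrow> real"
  assumes xnn: "\<And>k. k \<ge> 1 \<Longrightarrow> x k \<ge> 0"
    and anon: "\<And>k l. k \<ge> 1 \<Longrightarrow> l \<ge> 1 \<Longrightarrow> 0 \<le> a k l"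
    and asym: "\<And>k l. k \<ge> 1 \<Longrightarrow> l \<ge> 1 \<Longrightarrow> a k l = a l k"
    and summ: "\<And>k. k \<ge> 1 \<Longrightarrow> (\<lambda>l. a k l * x l) summable_on {1..}"
  shows "(\<Sum>k\<in>{1..N}. real k powr \<nu> * coag_rhs a s r x k) \<le>
     (1/2) * (\<Sum>(i,j)\<in>TN N. a i j * (real (i+j) powr \<nu> - real i powr \<nu> - real j powr \<nu>) * x i * x j)
     + (\<Sum>k\<in>{1..N}. real k powr \<nu> * s k) - (\<Sum>k\<in>{1..N}. real k powr \<nu> * r k * x k)"
proof -
  define L where "L k = (\<Sum>\<^sub>\<infinity>l\<in>{1..}. a k l * x l)" for k
  have g: "(\<Sum>k\<in>{1..N}. real k powr \<nu> * (\<Sum>l\<in>{1..<k}. a (k - l) l * x (k - l) * x l))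
      = (\<Sum>(i,j)\<in>TN N. real (i+j) powr \<nu> * a i j * x i * x j)"
  proof -
    have "(\<Sum>k\<in>{1..N}. real k powr \<nu> * (\<Sum>l\<in>{1..<k}. a (k - l) l * x (k - l) * x l))
      = (\<Sum>k\<in>{1..N}. \<Sum>l\<in>{1..<k}. real ((k-l) + l) powr \<nu> * a (k - l) l * x (k - l) * x l)"
      by (intro sum.cong refl) (auto simp: sum_distrib_left algebra_simps intro!: sum.cong)
    also have "\<dots> = (\<Sum>(i,j)\<in>TN N. real (i+j) powr \<nu> * a i j * x i * x j)"
      by (rule gain_reindex[where F="\<lambda>i j. real (i+j) powr \<nu> * a i j * x i * x j"])
    finally show ?thesis .
  qed
  have l1: "(\<Sum>(i,j)\<in>TN N. real i powr \<nu> * a i j * x i * x j) \<le> (\<Sum>k\<in>{1..N}. real k powr \<nu> * x k * L k)"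
  proof -
    have "(\<Sum>(i,j)\<in>TN N. real i powr \<nu> * a i j * x i * x j) = (\<Sum>k\<in>{1..N}. \<Sum>l\<in>{1..N-k}. real k powr \<nu> * a k l * x k * x l)"
      by (rule loss_reindex[symmetric])
    also have "\<dots> = (\<Sum>k\<in>{1..N}. real k powr \<nu> * x k * (\<Sum>l\<in>{1..N-k}. a k l * x l))"
      by (simp add: sum_distrib_left algebra_simps)
    also have "\<dots> \<le> (\<Sum>k\<in>{1..N}. real k powr \<nu> * x k * L k)"
    proof (rule sum_mono)
      fix k assume k: "k \<in> {1..N}"
      have "(\<Sum>l\<in>{1..N-k}. a k l * x l) \<le> L k" unfolding L_def
        by (rule partial_le) (use summ k anon xnn in auto)
      moreover have "0 \<le> real k powr \<nu> * x k" using xnn k by simp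
      ultimately show "real k powr \<nu> * x k * (\<Sum>l\<in>{1..N-k}. a k l * x l) \<le> real k powr \<nu> * x k * L k"
        by (rule mult_left_mono)
    qed
    finally show ?thesis .
  qed
  have l2: "(\<Sum>(i,j)\<in>TN N. real j powr \<nu> * a i j * x i * x j) = (\<Sum>(i,j)\<in>TN N. real i powr \<nu> * a i j * x i * x j)"
  proof -
    have "(\<Sum>(i,j)\<in>TN N. real j powr \<nu> * a i j * x i * x j) = (\<Sum>(i,j)\<in>TN N. real i powr \<nu> * a j i * x j * x i)"
      by (rule swap_reindex[where F="\<lambda>i j. real j powr \<nu> * a i j * x i * x j"])
    also have "\<dots> = (\<Sum>(i,j)\<in>TN N. real i powr \<nu> * a i j * x i * x j)"
      by (intro sum.cong refl) (auto simp: TN_def asym)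
    finally show ?thesis .
  qed
  have expand: "(\<Sum>k\<in>{1..N}. real k powr \<nu> * coag_rhs a s r x k) =
      (1/2) * (\<Sum>k\<in>{1..N}. real k powr \<nu> * (\<Sum>l\<in>{1..<k}. a (k - l) l * x (k - l) * x l))
      - (\<Sum>k\<in>{1..N}. real k powr \<nu> * x k * L k)
      + (\<Sum>k\<in>{1..N}. real k powr \<nu> * s k) - (\<Sum>k\<in>{1..N}. real k powr \<nu> * r k * x k)"
    unfolding coag_rhs_def L_def
    by (simp add: sum_distrib_left sum_subtractf sum.distrib algebra_simps)
  have split: "(\<Sum>(i,j)\<in>TN N. a i j * (real (i+j) powr \<nu> - real i powr \<nu> - real j powr \<nu>) * x i * x j)
     = (\<Sum>(i,j)\<in>TN N. real (i+j) powr \<nu> * a i j * x i * x j)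
       - (\<Sum>(i,j)\<in>TN N. real i powr \<nu> * a i j * x i * x j) - (\<Sum>(i,j)\<in>TN N. real j powr \<nu> * a i j * x i * x j)"
    by (simp add: sum_subtractf[symmetric] case_prod_beta algebra_simps)
  show ?thesis unfolding expand g split l2 using l1 by simp
qed



lemma gain_TN_bound:
  fixes x :: "nat \<Rightarrow> real" and a :: "nat \<Rightarrow> nat \<Rightarrow> real"
  assumes xnn: "\<And>k. k \<ge> 1 \<Longrightarrow> x k \<ge> 0"
    and anon: "\<And>k l. k \<ge> 1 \<Longrightarrow> l \<ge> 1 \<Longrightarrow> 0 \<le> a k l"
    and abd: "\<And>k l. k \<ge> 1 \<Longrightarrow> l \<ge> 1 \<Longrightarrow>
        a k l \<le> A * (real k powr \<alpha> * real l powr \<beta> + real k powr \<beta> * real l powr \<alpha>)"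
    and ab: "0 \<le> \<alpha>" "\<alpha> \<le> \<beta>" "\<beta> \<le> 1" and mu: "\<mu> > 1" "\<alpha> + \<beta> > 2 - \<mu>" and A: "A > 0"
  shows "(1/2) * (\<Sum>(i,j)\<in>TN N. a i j * (real (i+j) powr \<mu> - real i powr \<mu> - real j powr \<mu>) * x i * x j)
     \<le> A * gainC \<mu> * ((\<Sum>k\<in>{1..N}. real k powr (\<mu>+\<alpha>+\<beta>-1) * x k) * (\<Sum>k\<in>{1..N}. real k * x k))"
proof -
  define S where "S = \<mu>+\<alpha>+\<beta>-1"
  define G where "G i j = A * gainC \<mu> * ((real i powr S * real j + real i * real j powr S) * x i * x j)" for i j
  have G0: "G i j \<ge> 0" if "i \<ge> 1" "j \<ge> 1" for i j
    using gainC_nonneg[OF mu(1)] A xnn that unfolding G_def by (intro mult_nonneg_nonneg) auto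
  have pt: "a i j * (real (i+j) powr \<mu> - real i powr \<mu> - real j powr \<mu>) * x i * x j \<le> G i j"
    if ij: "(i,j) \<in> TN N" for i j
  proof -
    have i: "i \<ge> 1" "j \<ge> 1" using ij by (auto simp: TN_def)
    have ri: "real i > 0" "real j > 0" using i by auto
    have D0: "0 \<le> real (i+j) powr \<mu> - real i powr \<mu> - real j powr \<mu>"
      using gain_uv(2)[OF ri(2) ri(1) ab mu] by simp
    have gb: "(real i powr \<alpha> * real j powr \<beta> + real i powr \<beta> * real j powr \<alpha>) * (real (i+j) powr \<mu> - real i powr \<mu> - real j powr \<mu>)
        \<le> gainC \<mu> * (real i powr S * real j + real i * real j powr S)"
      using gain_uv(1)[OF ri(2) ri(1) ab mu] by (simp add: S_def)
    have "a i j * (real (i+j) powr \<mu> - real i powr \<mu> - real j powr \<mu>)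
        \<le> A * (real i powr \<alpha> * real j powr \<beta> + real i powr \<beta> * real j powr \<alpha>) * (real (i+j) powr \<mu> - real i powr \<mu> - real j powr \<mu>)"
      by (rule mult_right_mono[OF abd[OF i] D0])
    also have "\<dots> \<le> A * (gainC \<mu> * (real i powr S * real j + real i * real j powr S))"
      using gb A by (simp add: mult.assoc)
    finally have "a i j * (real (i+j) powr \<mu> - real i powr \<mu> - real j powr \<mu>) * (x i * x j)
        \<le> A * (gainC \<mu> * (real i powr S * real j + real i * real j powr S)) * (x i * x j)"
      by (rule mult_right_mono) (use xnn i in simp)
    then show ?thesis by (simp add: G_def algebra_simps)
  qed
  have "(\<Sum>(i,j)\<in>TN N. a i j * (real (i+j) powr \<mu> - real i powr \<mu> - real j powr \<mu>) * x i * x j)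
      \<le> (\<Sum>(i,j)\<in>TN N. G i j)"
    using pt by (intro sum_mono) auto
  also have "\<dots> \<le> (\<Sum>(i,j)\<in>{1..N}\<times>{1..N}. G i j)"
    by (rule sum_mono2) (auto simp: TN_def G0)
  also have "\<dots> = A * gainC \<mu> * (\<Sum>i\<in>{1..N}. \<Sum>j\<in>{1..N}. (real i powr S * x i) * (real j * x j) + (real i * x i) * (real j powr S * x j))"
    by (simp add: sum.cartesian_product[symmetric] G_def sum_distrib_left algebra_simps)
  also have "\<dots> = A * gainC \<mu> * (2 * ((\<Sum>k\<in>{1..N}. real k powr S * x k) * (\<Sum>k\<in>{1..N}. real k * x k)))"
  proof -
    have e1: "(\<Sum>i\<in>{1..N}. \<Sum>j\<in>{1..N}. (real i powr S * x i) * (real j * x j)) = (\<Sum>k\<in>{1..N}. real k powr S * x k) * (\<Sum>k\<in>{1..N}. real k * x k)"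
      by (rule sum_product[symmetric])
    have e2: "(\<Sum>i\<in>{1..N}. \<Sum>j\<in>{1..N}. (real i * x i) * (real j powr S * x j)) = (\<Sum>k\<in>{1..N}. real k * x k) * (\<Sum>k\<in>{1..N}. real k powr S * x k)"
      by (rule sum_product[symmetric])
    show ?thesis unfolding sum.distrib e1 e2 by (simp add: algebra_simps)
  qed
  finally show ?thesis by (simp add: S_def algebra_simps)
qed

lemma young_app:
  fixes p q b X Y \<kappa> :: real
  assumes p: "p > 1" and q: "q = p / (p - 1)" and b: "b \<ge> 0" and X: "X \<ge> 0" and Y: "Y \<ge> 0" and \<kappa>: "\<kappa> > 0"
  shows "b * (X powr (2 - 1/q) * Y powr (1/q)) \<le> \<kappa> * Y / q + b powr p * X powr (p+1) * \<kappa> powr (1-p) / p"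
proof -
  have q1: "q > 1" unfolding q using p by (simp add: less_divide_eq)
  have pq: "1/p + 1/q = 1" unfolding q using p by (simp add: field_simps)
  define aa where "aa = b * X powr (2 - 1/q) * \<kappa> powr (-1/q)"
  define bb where "bb = (\<kappa> * Y) powr (1/q)"
  have aa0: "aa \<ge> 0" "bb \<ge> 0" by (auto simp: aa_def bb_def intro!: mult_nonneg_nonneg b)
  have "aa * bb \<le> aa powr p / p + bb powr q / q" by (rule Youngs_inequality) (use p q1 pq aa0 in auto)
  moreover have "aa * bb = b * (X powr (2 - 1/q) * Y powr (1/q))"
  proof -
    have "\<kappa> powr (-1/q) * \<kappa> powr (1/q) = 1" using \<kappa> by (simp add: powr_add[symmetric])
    then show ?thesis unfolding aa_def bb_def by (simp add: powr_mult algebra_simps)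
  qed
  moreover have "bb powr q = \<kappa> * Y" unfolding bb_def using q1 \<kappa> Y by (simp add: powr_powr)
  moreover have "aa powr p = b powr p * X powr (p+1) * \<kappa> powr (1-p)"
  proof -
    have e1: "(2 - 1/q) * p = p + 1" unfolding q using p by (simp add: field_simps)
    have e2: "(-1/q) * p = 1 - p" unfolding q using p by (simp add: field_simps)
    have e3: "- (p / q) = 1 - p" using e2 by simp
    show ?thesis unfolding aa_def using b X \<kappa>
      by (simp add: powr_mult powr_powr e1 e2 e3)
  qed
  ultimately show ?thesis by simp
qed



locale setting =
  fixes a :: "nat \<Rightarrow> nat \<Rightarrow> real" and r s cin :: "nat \<Rightarrow> real"
    and c :: "real \<Rightarrow> nat \<Rightarrow> real"
    and A R \<alpha> \<beta> \<gamma> \<mu> :: real and \<ss> :: "real \<Rightarrow> real"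
  assumes A_pos: "A > 0" and \<alpha>\<beta>: "0 \<le> \<alpha>" "\<alpha> \<le> \<beta>" "\<beta> \<le> 1"
    and a_sym: "\<And>k l. k \<ge> 1 \<Longrightarrow> l \<ge> 1 \<Longrightarrow> a k l = a l k"
    and a_nonneg: "\<And>k l. k \<ge> 1 \<Longrightarrow> l \<ge> 1 \<Longrightarrow> 0 \<le> a k l"
    and a_bound: "\<And>k l. k \<ge> 1 \<Longrightarrow> l \<ge> 1 \<Longrightarrow>
        a k l \<le> A * (real k powr \<alpha> * real l powr \<beta> + real k powr \<beta> * real l powr \<alpha>)"
    and R_pos: "R > 0" and \<gamma>: "\<gamma> > max 0 (\<alpha> + \<beta> - 1)"
    and r_bound: "\<And>k. k \<ge> 1 \<Longrightarrow> r k \<ge> R * real k powr \<gamma>"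
    and s_nonneg: "\<And>k. k \<ge> 1 \<Longrightarrow> s k \<ge> 0"
    and s_mom: "\<And>\<nu>. \<nu> \<ge> 0 \<Longrightarrow> \<ss> \<nu> > 0 \<and>
        (\<lambda>k. real k powr \<nu> * s k) summable_on {1..} \<and>
        (\<Sum>\<^sub>\<infinity>k\<in>{1..}. real k powr \<nu> * s k) \<le> \<ss> \<nu>"
    and sol: "global_solution a s r cin c"
    and \<mu>: "\<mu> > max (2 - \<alpha> - \<beta>) 1"
begin

lemma mu1: "\<mu> > 1" "\<alpha> + \<beta> > 2 - \<mu>" using \<mu> by auto
lemma gam: "\<gamma> > 0" "\<gamma> > \<alpha> + \<beta> - 1" using \<gamma> by auto

lemma c_nn: "t \<ge> 0 \<Longrightarrow> k \<ge> 1 \<Longrightarrow> 0 \<le> c t k"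
  using sol unfolding global_solution_def by blast

lemma c_der: "t > 0 \<Longrightarrow> k \<ge> 1 \<Longrightarrow> ((\<lambda>\<tau>. c \<tau> k) has_real_derivative coag_rhs a s r (c t) k) (at t)"
  using sol unfolding global_solution_def by blast

lemma C1: "\<nu> \<ge> 1 \<Longrightarrow> C1_wl1 \<nu> c"
  using sol unfolding global_solution_def by blast

definition Dv :: "real \<Rightarrow> real \<Rightarrow> real" where
  "Dv \<nu> t = infsum (\<lambda>k. real k powr \<nu> * coag_rhs a s r (c t) k) {1..}"

definition P :: "real \<Rightarrow> nat \<Rightarrow> real \<Rightarrow> real" where
  "P e N t = (\<Sum>k\<in>{1..N}. real k powr e * c t k)"

lemma mom_deriv:
  assumes "\<nu> \<ge> 1" "t > 0"
  shows "((\<lambda>\<tau>. moment \<nu> (c \<tau>)) has_real_derivative Dv \<nu> t) (at t)"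
    and "(\<lambda>k. real k powr \<nu> * coag_rhs a s r (c t) k) summable_on {1..}"
    and "wl1 \<nu> (c t)"
  using C1_moment_deriv[OF C1[OF assms(1)] c_nn c_der assms(2)] by (auto simp: Dv_def)

lemma mom_summable:
  assumes "e \<ge> 1" "t > 0"
  shows "(\<lambda>k. real k powr e * c t k) summable_on {1..}"
  using wl1_summable[OF mom_deriv(3)[OF assms]] .

lemma P_tendsto: "e \<ge> 1 \<Longrightarrow> t > 0 \<Longrightarrow> (\<lambda>N. P e N t) \<longlonglongrightarrow> moment e (c t)"
  unfolding P_def moment_def by (rule partial_tendsto[OF mom_summable])

lemma P_le: "e \<ge> 1 \<Longrightarrow> t > 0 \<Longrightarrow> P e N t \<le> moment e (c t)"
  unfolding P_def moment_def by (rule partial_le[OF mom_summable]) (auto intro!: mult_nonneg_nonneg c_nn)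

lemma P_nn: "t \<ge> 0 \<Longrightarrow> 0 \<le> P e N t"
  unfolding P_def by (intro sum_nonneg) (auto intro!: mult_nonneg_nonneg c_nn)

lemma Dv_tendsto: "\<nu> \<ge> 1 \<Longrightarrow> t > 0 \<Longrightarrow>
   (\<lambda>N. \<Sum>k\<in>{1..N}. real k powr \<nu> * coag_rhs a s r (c t) k) \<longlonglongrightarrow> Dv \<nu> t"
  unfolding Dv_def by (rule partial_tendsto[OF mom_deriv(2)])

lemma ak_summable:
  assumes t: "t > 0" and k: "k \<ge> 1"
  shows "(\<lambda>l. a k l * c t l) summable_on {1..}"
proof -
  have s1: "(\<lambda>l. 2 * A * real k * (real l powr 1 * c t l)) summable_on {1..}"
    using mom_summable[of 1 t] t by (intro summable_on_cmult_right) auto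
  show ?thesis
  proof (rule summable_on_comparison_test[OF s1])
    fix l :: nat assume l: "l \<in> {1..}"
    then have l1: "l \<ge> 1" by simp
    have kb: "real k powr \<alpha> \<le> real k" "real k powr \<beta> \<le> real k"
      using powr_mono[of \<alpha> 1 "real k"] powr_mono[of \<beta> 1 "real k"] k \<alpha>\<beta> by auto
    have lb: "real l powr \<alpha> \<le> real l" "real l powr \<beta> \<le> real l"
      using powr_mono[of \<alpha> 1 "real l"] powr_mono[of \<beta> 1 "real l"] l1 \<alpha>\<beta> by auto
    have "real k powr \<alpha> * real l powr \<beta> \<le> real k * real l" using kb lb by (intro mult_mono) auto
    moreover have "real k powr \<beta> * real l powr \<alpha> \<le> real k * real l" using kb lb by (intro mult_mono) auto
    ultimately have "a k l \<le> A * (2 * (real k * real l))"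
      using a_bound[OF k l1] A_pos by (smt (verit) mult_left_mono)
    then have "a k l * c t l \<le> A * (2 * (real k * real l)) * c t l"
      by (rule mult_right_mono) (use c_nn t l1 in simp)
    then show "a k l * c t l \<le> 2 * A * real k * (real l powr 1 * c t l)" using l1 by (simp add: algebra_simps)
    show "0 \<le> a k l * c t l" using a_nonneg[OF k l1] c_nn[of t l] t l1 by simp
  qed
qed

lemma trunc: "t > 0 \<Longrightarrow> (\<Sum>k\<in>{1..N}. real k powr \<nu> * coag_rhs a s r (c t) k) \<le>
     (1/2) * (\<Sum>(i,j)\<in>TN N. a i j * (real (i+j) powr \<nu> - real i powr \<nu> - real j powr \<nu>) * c t i * c t j)
     + (\<Sum>k\<in>{1..N}. real k powr \<nu> * s k) - (\<Sum>k\<in>{1..N}. real k powr \<nu> * r k * c t k)"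
  by (rule trunc_ineq) (auto intro: c_nn a_nonneg a_sym ak_summable[simplified])

lemma s_part: "\<nu> \<ge> 0 \<Longrightarrow> (\<Sum>k\<in>{1..N}. real k powr \<nu> * s k) \<le> \<ss> \<nu>"
proof -
  assume n: "\<nu> \<ge> 0"
  have "(\<Sum>k\<in>{1..N}. real k powr \<nu> * s k) \<le> (\<Sum>\<^sub>\<infinity>k\<in>{1..}. real k powr \<nu> * s k)"
    by (rule partial_le) (use s_mom[OF n] s_nonneg in auto)
  then show ?thesis using s_mom[OF n] by linarith
qed

lemma r_part: "t \<ge> 0 \<Longrightarrow> R * P (\<nu>+\<gamma>) N t \<le> (\<Sum>k\<in>{1..N}. real k powr \<nu> * r k * c t k)"
  unfolding P_def sum_distrib_left
proof (rule sum_mono)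
  fix k assume t: "t \<ge> 0" and k: "k \<in> {1..N}"
  have "R * real k powr \<gamma> \<le> r k" using r_bound k by auto
  then have "real k powr \<nu> * c t k * (R * real k powr \<gamma>) \<le> real k powr \<nu> * c t k * r k"
    by (rule mult_left_mono) (use c_nn t k in auto)
  then show "R * (real k powr (\<nu>+\<gamma>) * c t k) \<le> real k powr \<nu> * r k * c t k"
    by (simp add: powr_add algebra_simps)
qed


lemma one_est: assumes t: "t > 0" shows "Dv 1 t \<le> \<ss> 1 - R * moment 1 (c t)"
proof -
  have b: "(\<Sum>k\<in>{1..N}. real k powr 1 * coag_rhs a s r (c t) k) \<le> \<ss> 1 - R * P 1 N t" for N
  proof -
    have g0: "(\<Sum>(i,j)\<in>TN N. a i j * (real (i+j) powr 1 - real i powr 1 - real j powr 1) * c t i * c t j) = 0"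
      by (intro sum.neutral) auto
    have "P 1 N t \<le> P (1+\<gamma>) N t" unfolding P_def
    proof (rule sum_mono)
      fix k assume k: "k \<in> {1..N}"
      have "real k powr 1 \<le> real k powr (1+\<gamma>)" using gam k by (intro powr_mono) auto
      then show "real k powr 1 * c t k \<le> real k powr (1+\<gamma>) * c t k"
        by (rule mult_right_mono) (use c_nn t k in auto)
    qed
    then have "R * P 1 N t \<le> R * P (1+\<gamma>) N t" using R_pos by simp
    then show ?thesis using trunc[OF t, where N=N and \<nu>=1] g0 s_part[of 1 N] r_part[of t 1 N] t by simp
  qed
  have "Dv 1 t \<le> \<ss> 1 - R * moment 1 (c t)"
  proof (rule LIMSEQ_le[OF Dv_tendsto[of 1 t]])
    show "(\<lambda>N. \<ss> 1 - R * P 1 N t) \<longlonglongrightarrow> \<ss> 1 - R * moment 1 (c t)"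
      by (intro tendsto_intros P_tendsto) (use t in auto)
  qed (use t b in auto)
  then show ?thesis .
qed

definition "pp = (\<mu>+\<gamma>-1)/(1+\<gamma>-\<alpha>-\<beta>)"
definition "qq = pp / (pp - 1)"
definition "\<rho> = \<gamma> / (\<mu>-1)"
definition "bb = A * gainC \<mu>"
definition "EE lm X = bb powr pp * X powr (pp+1) * (qq*lm*R) powr (1-pp) / pp"

lemma pp_gt: "pp > 1"
proof -
  have d: "1+\<gamma>-\<alpha>-\<beta> > 0" using gam by simp
  have "\<mu>+\<gamma>-1 > 1+\<gamma>-\<alpha>-\<beta>" using mu1 by simp
  then show ?thesis unfolding pp_def using d by (simp add: less_divide_eq)
qed

lemma qq_inv: "1/qq = (\<mu>+\<alpha>+\<beta>-2)/(\<mu>+\<gamma>-1)"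
proof -
  have d: "1+\<gamma>-\<alpha>-\<beta> > 0" "\<mu>+\<gamma>-1 > 0" using gam mu1 by auto
  have "1/qq = (pp-1)/pp" unfolding qq_def using pp_gt by simp
  also have "\<dots> = 1 - 1/pp" using pp_gt by (simp add: field_simps)
  also have "1/pp = (1+\<gamma>-\<alpha>-\<beta>)/(\<mu>+\<gamma>-1)" unfolding pp_def by simp
  finally show ?thesis using d by (simp add: field_simps)
qed

lemma qq_gt: "qq > 1" unfolding qq_def using pp_gt by (simp add: less_divide_eq)

lemma EE_mono: "0 \<le> X \<Longrightarrow> X \<le> X' \<Longrightarrow> 0 < lm \<Longrightarrow> EE lm X \<le> EE lm X'"
  unfolding EE_def using pp_gt
  by (intro divide_right_mono mult_right_mono mult_left_mono powr_mono2) auto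

lemma mu_est:
  assumes t: "t > 0" and l: "0 < lm" "lm < 1"
  shows "(1-lm)*R*moment \<mu> (c t) \<le> \<ss> \<mu> + EE lm (moment 1 (c t)) - Dv \<mu> t"
    and "(1-lm)*R*(moment \<mu> (c t)) powr (1+\<rho>) \<le> (moment 1 (c t)) powr \<rho> * (\<ss> \<mu> + EE lm (moment 1 (c t)) - Dv \<mu> t)"
proof -
  define m1 where "m1 = moment 1 (c t)"
  define K where "K = \<ss> \<mu> + EE lm m1"
  define DN where "DN N = (\<Sum>k\<in>{1..N}. real k powr \<mu> * coag_rhs a s r (c t) k)" for N
  have t0: "t \<ge> 0" using t by simp
  have X1: "P 1 N t = (\<Sum>k\<in>{1..N}. real k * c t k)" for N unfolding P_def by simp
  have main: "(1-lm)*R*P (\<mu>+\<gamma>) N t \<le> K - DN N" for N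
  proof -
    define X Y where "X = P 1 N t" and "Y = P (\<mu>+\<gamma>) N t"
    have X0: "X \<ge> 0" "Y \<ge> 0" unfolding X_def Y_def using P_nn t0 by auto
    have Xm: "X \<le> m1" unfolding X_def m1_def using P_le[of 1 t N] t by simp
    have g: "(1/2) * (\<Sum>(i,j)\<in>TN N. a i j * (real (i+j) powr \<mu> - real i powr \<mu> - real j powr \<mu>) * c t i * c t j)
       \<le> bb * (P (\<mu>+\<alpha>+\<beta>-1) N t * X)"
      using gain_TN_bound[of "c t" a A \<alpha> \<beta> \<mu> N] c_nn t0 a_nonneg a_bound \<alpha>\<beta> mu1 A_pos
      unfolding bb_def X_def X1 P_def by (simp add: mult.assoc)
    have th1: "0 < 1/qq" "1/qq < 1" using qq_gt by auto
    have ex1: "(1 - 1/qq) + 1/qq * (\<mu>+\<gamma>) = \<mu>+\<alpha>+\<beta>-1"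
    proof -
      have "\<mu>+\<gamma>-1 > 0" using mu1 gam by simp
      then have e1: "1/qq * (\<mu>+\<gamma>-1) = \<mu>+\<alpha>+\<beta>-2" unfolding qq_inv by simp
      have e2: "1/qq * (\<mu>+\<gamma>) = 1/qq * (\<mu>+\<gamma>-1) + 1/qq" by (simp add: add_divide_distrib[symmetric] diff_divide_distrib[symmetric])
      show ?thesis using e1 e2 by linarith
    qed
    have ip: "P (\<mu>+\<alpha>+\<beta>-1) N t \<le> X powr (1 - 1/qq) * Y powr (1/qq)"
      using interp_fin[of "{1..N}" "c t" "1/qq" "\<mu>+\<gamma>"] th1 c_nn t0
      unfolding ex1 X_def Y_def X1 by (simp add: P_def)
    have "bb * (P (\<mu>+\<alpha>+\<beta>-1) N t * X) \<le> bb * ((X powr (1 - 1/qq) * Y powr (1/qq)) * X)"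
      using ip X0 gainC_nonneg[OF mu1(1)] A_pos unfolding bb_def
      by (intro mult_left_mono mult_right_mono) auto
    also have "(X powr (1 - 1/qq) * Y powr (1/qq)) * X = X powr (2 - 1/qq) * Y powr (1/qq)"
    proof -
      have x1: "X powr 1 = X" using X0 by (simp add: powr_one)
      have "X powr (1 - 1/qq) * X = X powr (1 - 1/qq) * X powr 1" by (subst x1) (rule refl)
      also have "\<dots> = X powr (2 - 1/qq)" by (simp only: powr_add[symmetric]) (simp add: algebra_simps)
      finally show ?thesis by (simp add: algebra_simps)
    qed
    also have "bb * (X powr (2 - 1/qq) * Y powr (1/qq)) \<le> (qq*lm*R) * Y / qq + EE lm X"
      unfolding EE_def
      by (rule young_app[OF pp_gt qq_def]) (use X0 gainC_nonneg[OF mu1(1)] A_pos qq_gt l R_pos in \<open>auto simp: bb_def\<close>)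
    also have "(qq*lm*R) * Y / qq = lm*R*Y" using qq_gt by simp
    finally have gY: "(1/2) * (\<Sum>(i,j)\<in>TN N. a i j * (real (i+j) powr \<mu> - real i powr \<mu> - real j powr \<mu>) * c t i * c t j)
        \<le> lm*R*Y + EE lm X" using g by linarith
    have "EE lm X \<le> EE lm m1" by (rule EE_mono) (use X0 Xm l in auto)
    moreover have "(\<Sum>k\<in>{1..N}. real k powr \<mu> * s k) \<le> \<ss> \<mu>" using s_part mu1 by simp
    moreover have "R * Y \<le> (\<Sum>k\<in>{1..N}. real k powr \<mu> * r k * c t k)" unfolding Y_def by (rule r_part[OF t0])
    ultimately have "DN N \<le> lm*R*Y + EE lm m1 + \<ss> \<mu> - R * Y"
      using trunc[OF t, where N=N and \<nu>=\<mu>] gY unfolding DN_def by linarith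
    then show ?thesis unfolding K_def Y_def by (simp add: algebra_simps)
  qed
  have Rl: "(1-lm)*R > 0" using l R_pos by simp
  have zw: "P \<mu> N t \<le> P (\<mu>+\<gamma>) N t" for N unfolding P_def
  proof (rule sum_mono)
    fix k assume k: "k \<in> {1..N}"
    have "real k powr \<mu> \<le> real k powr (\<mu>+\<gamma>)" using gam k by (intro powr_mono) auto
    then show "real k powr \<mu> * c t k \<le> real k powr (\<mu>+\<gamma>) * c t k"
      by (rule mult_right_mono) (use c_nn t k in auto)
  qed
  have b1: "(1-lm)*R*P \<mu> N t \<le> K - DN N" for N
    using main[of N] zw[of N] Rl by (smt (verit) mult_left_mono)
  have b2: "(1-lm)*R*(P \<mu> N t) powr (1+\<rho>) \<le> m1 powr \<rho> * (K - DN N)" for N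
  proof -
    define X Y Z where "X = P 1 N t" and "Y = P (\<mu>+\<gamma>) N t" and "Z = P \<mu> N t"
    have X0: "X \<ge> 0" "Y \<ge> 0" "Z \<ge> 0" unfolding X_def Y_def Z_def using P_nn t0 by auto
    have Xm: "X \<le> m1" unfolding X_def m1_def using P_le[of 1 t N] t by simp
    define \<theta> where "\<theta> = (\<mu>-1)/(\<mu>+\<gamma>-1)"
    have d: "\<mu>-1 > 0" "\<mu>+\<gamma>-1 > 0" using mu1 gam by auto
    have th: "0 < \<theta>" "\<theta> < 1" unfolding \<theta>_def using d gam by (auto simp: field_simps)
    have ex: "(1-\<theta>) + \<theta>*(\<mu>+\<gamma>) = \<mu>"
    proof -
      have e1: "\<theta>*(\<mu>+\<gamma>-1) = \<mu>-1" unfolding \<theta>_def using d by simp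
      have e2: "\<theta>*(\<mu>+\<gamma>) = \<theta>*(\<mu>+\<gamma>-1) + \<theta>" by (simp add: algebra_simps)
      show ?thesis using e1 e2 by linarith
    qed
    have ip: "Z \<le> X powr (1-\<theta>) * Y powr \<theta>"
      using interp_fin[of "{1..N}" "c t" \<theta> "\<mu>+\<gamma>"] th c_nn t0
      unfolding ex X_def Y_def Z_def X1 by (simp add: P_def)
    have r00: "\<rho> \<ge> 0" unfolding \<rho>_def using d gam by simp
    then have r0: "1+\<rho> > 0" "\<rho> \<ge> 0" by auto
    have o1: "1-\<theta> = \<gamma>/(\<mu>+\<gamma>-1)" unfolding \<theta>_def using d by (simp add: field_simps)
    have o2: "1+\<rho> = (\<mu>+\<gamma>-1)/(\<mu>-1)" unfolding \<rho>_def using d by (simp add: field_simps)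
    have "Z powr (1+\<rho>) \<le> (X powr (1-\<theta>) * Y powr \<theta>) powr (1+\<rho>)"
      by (rule powr_mono2) (use r0 X0 ip in auto)
    also have "\<dots> = X powr ((1-\<theta>)*(1+\<rho>)) * Y powr (\<theta>*(1+\<rho>))"
      by (simp add: powr_mult powr_powr)
    also have "(1-\<theta>)*(1+\<rho>) = \<rho>"
      unfolding o1 o2 unfolding \<rho>_def using d by simp
    also have "\<theta>*(1+\<rho>) = 1" unfolding o2 unfolding \<theta>_def using d by simp
    finally have zz: "Z powr (1+\<rho>) \<le> X powr \<rho> * Y" using X0 by simp
    have KD: "0 \<le> K - DN N" using main[of N] Rl X0 unfolding Y_def by (smt (verit) mult_nonneg_nonneg)
    have "(1-lm)*R*Z powr (1+\<rho>) \<le> (1-lm)*R*(X powr \<rho> * Y)" by (rule mult_left_mono[OF zz]) (use Rl in simp)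
    also have "\<dots> = X powr \<rho> * ((1-lm)*R*Y)" by simp
    also have "\<dots> \<le> X powr \<rho> * (K - DN N)" using main[of N] unfolding Y_def by (intro mult_left_mono) auto
    also have "\<dots> \<le> m1 powr \<rho> * (K - DN N)" using KD Xm X0 r0 by (intro mult_right_mono powr_mono2) auto
    finally show ?thesis unfolding Z_def .
  qed
  have DN: "DN \<longlonglongrightarrow> Dv \<mu> t" unfolding DN_def using Dv_tendsto[of \<mu> t] mu1 t by simp
  have PZ: "(\<lambda>N. P \<mu> N t) \<longlonglongrightarrow> moment \<mu> (c t)" using P_tendsto[of \<mu> t] mu1 t by simp
  show "(1-lm)*R*moment \<mu> (c t) \<le> \<ss> \<mu> + EE lm (moment 1 (c t)) - Dv \<mu> t"
  proof -
    have "(1-lm)*R*moment \<mu> (c t) \<le> K - Dv \<mu> t"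
      by (rule LIMSEQ_le[OF tendsto_mult[OF tendsto_const PZ] tendsto_diff[OF tendsto_const DN]])
         (use b1 in auto)
    then show ?thesis unfolding K_def m1_def .
  qed
  show "(1-lm)*R*(moment \<mu> (c t)) powr (1+\<rho>) \<le> (moment 1 (c t)) powr \<rho> * (\<ss> \<mu> + EE lm (moment 1 (c t)) - Dv \<mu> t)"
  proof -
    have "\<rho> \<ge> 0" unfolding \<rho>_def using mu1 gam by simp
    then have r0: "1+\<rho> > 0" by simp
    have PZp: "(\<lambda>N. (P \<mu> N t) powr (1+\<rho>)) \<longlonglongrightarrow> (moment \<mu> (c t)) powr (1+\<rho>)"
      by (rule tendsto_powr'[OF PZ tendsto_const]) (use r0 P_nn t0 in auto)
    have "(1-lm)*R*(moment \<mu> (c t)) powr (1+\<rho>) \<le> m1 powr \<rho> * (K - Dv \<mu> t)"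
      by (rule LIMSEQ_le[OF tendsto_mult[OF tendsto_const PZp] tendsto_mult[OF tendsto_const tendsto_diff[OF tendsto_const DN]]])
         (use b2 in auto)
    then show ?thesis unfolding K_def m1_def .
  qed
qed


definition "\<theta>g = gainC \<mu> / (2 powr \<mu> * \<mu>)"
definition "lmc = (\<theta>g + 3/4)/2"
definition "ec = (4/3) powr (1/(pp+1+\<rho>))"
definition "w1 = \<ss> 1 / R"
definition "wm = \<ss> \<mu> / R"
definition "Ah = A / R"
definition "Kc = (2 powr \<mu> * \<mu>) powr pp * qq powr (1-pp) / pp"
definition "MM = Kc * Ah powr pp * w1 powr (1+pp)"

lemma rho_nn: "\<rho> \<ge> 0" unfolding \<rho>_def using mu1 gam by simp

lemma two_mu_pos: "2 powr \<mu> * \<mu> > 0" using mu1 by simp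

lemma thg: "0 \<le> \<theta>g" "\<theta>g < 3/4"
proof -
  show "0 \<le> \<theta>g" unfolding \<theta>g_def using gainC_nonneg[OF mu1(1)] two_mu_pos by simp
  show "\<theta>g < 3/4" unfolding \<theta>g_def using gainC_lt[OF mu1(1)] two_mu_pos by (simp add: divide_less_eq)
qed

lemma lmc: "0 < lmc" "lmc < 3/4" "\<theta>g \<le> lmc" using thg unfolding lmc_def by auto

lemma bb_eq: "bb = \<theta>g * (2 powr \<mu> * \<mu>) * A"
proof -
  have "2 powr \<mu> * \<mu> \<noteq> 0" using two_mu_pos by linarith
  then show ?thesis unfolding bb_def \<theta>g_def by simp
qed

lemma s_pos: "w1 > 0" "wm > 0"
  using s_mom[of 1] s_mom[of \<mu>] mu1 R_pos unfolding w1_def wm_def by auto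

lemma Kc_pos: "Kc > 0"
proof -
  have "(2 powr \<mu> * \<mu>) powr pp > 0" using two_mu_pos by (metis powr_gt_zero less_numeral_extra(3))
  moreover have "qq powr (1-pp) > 0" using qq_gt by simp
  ultimately show ?thesis unfolding Kc_def using pp_gt by simp
qed

lemma MM_pos: "MM > 0" unfolding MM_def using Kc_pos s_pos A_pos R_pos by (simp add: Ah_def)

lemma ec: "ec \<ge> 1" "ec powr (pp+1) \<le> 4/3" "ec powr \<rho> \<le> 4/3"
proof -
  have d: "pp+1+\<rho> > 0" using pp_gt rho_nn by simp
  show "ec \<ge> 1" unfolding ec_def using d by (intro ge_one_powr_ge_zero) auto
  have "ec powr (pp+1) = (4/3) powr ((pp+1)/(pp+1+\<rho>))" unfolding ec_def by (simp add: powr_powr)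
  also have "\<dots> \<le> (4/3) powr 1" using d rho_nn by (intro powr_mono) (auto simp: divide_le_eq)
  finally show "ec powr (pp+1) \<le> 4/3" by simp
  have "ec powr \<rho> = (4/3) powr (\<rho>/(pp+1+\<rho>))" unfolding ec_def by (simp add: powr_powr)
  also have "\<dots> \<le> (4/3) powr 1" using d pp_gt by (intro powr_mono) (auto simp: divide_le_eq)
  finally show "ec powr \<rho> \<le> 4/3" by simp
qed

lemma EE_eq:
  assumes "lm > 0" "X \<ge> 0"
  shows "EE lm X = R * (\<theta>g powr pp * lm powr (1-pp)) * Kc * Ah powr pp * X powr (pp+1)"
proof -
  have R1: "R powr (1-pp) = R / R powr pp" using R_pos by (simp add: powr_diff)
  have "bb powr pp = \<theta>g powr pp * (2 powr \<mu> * \<mu>) powr pp * A powr pp"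
    unfolding bb_eq using thg two_mu_pos A_pos by (simp add: powr_mult)
  moreover have "(qq*lm*R) powr (1-pp) = qq powr (1-pp) * lm powr (1-pp) * (R / R powr pp)"
    using qq_gt assms R_pos R1 by (simp add: powr_mult)
  moreover have "Ah powr pp = A powr pp / R powr pp" unfolding Ah_def using A_pos R_pos by (simp add: powr_divide)
  ultimately show ?thesis unfolding EE_def Kc_def by (simp add: field_simps)
qed

lemma EE_bound: "EE lmc (ec * w1) \<le> R * MM"
proof -
  have X0: "ec * w1 \<ge> 0" using ec s_pos by simp
  have "\<theta>g powr pp * lmc powr (1-pp) \<le> lmc powr pp * lmc powr (1-pp)"
    using thg lmc pp_gt by (intro mult_right_mono powr_mono2) auto
  also have "\<dots> = lmc" using lmc by (simp add: powr_add[symmetric])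
  finally have t1: "\<theta>g powr pp * lmc powr (1-pp) \<le> lmc" .
  have "(ec * w1) powr (pp+1) = ec powr (pp+1) * w1 powr (1+pp)" by (simp add: powr_mult add.commute)
  then have "EE lmc (ec * w1) = R * (\<theta>g powr pp * lmc powr (1-pp)) * ec powr (pp+1) * MM"
    unfolding EE_eq[OF lmc(1) X0] MM_def by simp
  also have "\<dots> \<le> R * lmc * (4/3) * MM"
    using t1 ec MM_pos R_pos lmc by (intro mult_mono mult_right_mono mult_left_mono) auto
  also have "\<dots> \<le> R * MM" using lmc R_pos MM_pos by simp
  finally show ?thesis .
qed

lemma m1_eventually: "\<exists>T\<ge>1. \<forall>t\<ge>T. moment 1 (c t) \<le> ec * w1"
proof (cases "ec = 1")
  case False
  then have e1: "ec > 1" using ec by simp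
  have "\<exists>T\<ge>1. \<forall>t\<ge>T. moment 1 (c t) \<le> ec * w1"
  proof (rule eventually_le_ode[where f'="Dv 1" and \<delta>="(ec-1)*\<ss> 1"])
    show "((\<lambda>t. moment 1 (c t)) has_real_derivative Dv 1 t) (at t)" if "t \<ge> 1" for t
      using mom_deriv(1)[of 1 t] that by simp
    show "Dv 1 t \<le> - ((ec - 1) * \<ss> 1)" if "t \<ge> 1" "ec * w1 \<le> moment 1 (c t)" for t
    proof -
      have a1: "Dv 1 t \<le> \<ss> 1 - R * moment 1 (c t)" using one_est that by simp
      have a2: "R * (ec * w1) \<le> R * moment 1 (c t)" using that R_pos by simp
      have "R * w1 = \<ss> 1" unfolding w1_def using R_pos by simp
      then have a3: "R * (ec * w1) = ec * \<ss> 1" by (simp add: algebra_simps)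
      have a4: "- ((ec - 1) * \<ss> 1) = \<ss> 1 - ec * \<ss> 1" by (simp add: algebra_simps)
      show ?thesis unfolding a4 using a1 a2 a3 by linarith
    qed
    show "(ec-1) * \<ss> 1 > 0" using e1 s_mom[of 1] by simp
  qed
  then show ?thesis .
next
  case True
  then have "1/(pp+1+\<rho>) = 0" unfolding ec_def by simp
  then show ?thesis using pp_gt rho_nn by simp
qed



end
context setting begin

lemma mom_nn: "t \<ge> 0 \<Longrightarrow> 0 \<le> moment e (c t)"
  unfolding moment_def by (intro infsum_nonneg) (auto intro!: mult_nonneg_nonneg c_nn)

lemma ss_mu: "\<ss> \<mu> = R * wm" unfolding wm_def using R_pos by simp

lemma EE_m1:
  assumes "t > 0" "moment 1 (c t) \<le> ec * w1"
  shows "EE lmc (moment 1 (c t)) \<le> R * MM"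
  using EE_mono[OF mom_nn assms(2) lmc(1)] EE_bound assms(1) by simp

lemma mu_eventually2: "\<exists>T\<ge>1. \<forall>t\<ge>T. moment \<mu> (c t) \<le> 4*(MM + wm)"
proof -
  obtain T1 where T1: "T1 \<ge> 1" "\<And>t. t \<ge> T1 \<Longrightarrow> moment 1 (c t) \<le> ec * w1" using m1_eventually by blast
  define K where "K = 4*(MM + wm)"
  have Kp: "MM + wm > 0" using MM_pos s_pos by simp
  have "\<exists>T\<ge>T1. \<forall>t\<ge>T. moment \<mu> (c t) \<le> K"
  proof (rule eventually_le_ode[where f'="Dv \<mu>" and \<delta>="R * ((4*(1-lmc)-1)*(MM+wm))"])
    show "((\<lambda>t. moment \<mu> (c t)) has_real_derivative Dv \<mu> t) (at t)" if "t \<ge> T1" for t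
      using mom_deriv(1)[of \<mu> t] that T1 mu1 by simp
    show "Dv \<mu> t \<le> - (R * ((4*(1-lmc)-1)*(MM+wm)))" if t: "t \<ge> T1" "K \<le> moment \<mu> (c t)" for t
    proof -
      have tp: "t > 0" using t T1 by simp
      have a1: "(1-lmc)*R*moment \<mu> (c t) \<le> \<ss> \<mu> + EE lmc (moment 1 (c t)) - Dv \<mu> t"
        using mu_est(1)[OF tp lmc(1)] lmc by simp
      have a2: "EE lmc (moment 1 (c t)) \<le> R * MM" using EE_m1[OF tp T1(2)[OF t(1)]] .
      have a3: "(1-lmc)*R*K \<le> (1-lmc)*R*moment \<mu> (c t)"
        using t(2) lmc R_pos by (intro mult_left_mono) auto
      have a4: "(1-lmc)*R*K = R * ((4*(1-lmc))*(MM+wm))" unfolding K_def by (simp add: algebra_simps)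
      have a5: "R * ((4*(1-lmc)-1)*(MM+wm)) = R * ((4*(1-lmc))*(MM+wm)) - R*MM - R*wm"
        by (simp add: algebra_simps)
      show ?thesis using a1 a2 a3 a4 a5 ss_mu by linarith
    qed
    show "R * ((4*(1-lmc)-1)*(MM+wm)) > 0" using R_pos Kp lmc by simp
  qed
  then show ?thesis using T1 unfolding K_def by (meson order_trans)
qed

lemma mu_eventually1: "\<exists>T\<ge>1. \<forall>t\<ge>T. moment \<mu> (c t) \<le> 2 * (2 powr (2+\<rho>) * w1 powr \<rho> * (MM + wm)) powr (1/(1+\<rho>))"
proof -
  obtain T1 where T1: "T1 \<ge> 1" "\<And>t. t \<ge> T1 \<Longrightarrow> moment 1 (c t) \<le> ec * w1" using m1_eventually by blast
  define Z where "Z = 2 powr (2+\<rho>) * w1 powr \<rho> * (MM + wm)"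
  define K where "K = 2 * Z powr (1/(1+\<rho>))"
  have Kp: "MM + wm > 0" using MM_pos s_pos by simp
  have Z0: "Z > 0" unfolding Z_def using Kp s_pos by simp
  have r0: "1+\<rho> > 0" using rho_nn by simp
  have K0: "K \<ge> 0" unfolding K_def by simp
  have KZ: "K powr (1+\<rho>) = 2 powr (1+\<rho>) * Z"
  proof -
    have "K powr (1+\<rho>) = 2 powr (1+\<rho>) * (Z powr (1/(1+\<rho>))) powr (1+\<rho>)" unfolding K_def by (simp add: powr_mult)
    also have "(Z powr (1/(1+\<rho>))) powr (1+\<rho>) = Z" using r0 Z0 by (simp add: powr_powr)
    finally show ?thesis .
  qed
  have p2: "2 powr (1+\<rho>) * 2 powr (2+\<rho>) \<ge> 8"
  proof -
    have "2 powr (1+\<rho>) * 2 powr (2+\<rho>) = 2 powr (3 + 2*\<rho>)" by (simp add: powr_add[symmetric])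
    also have "\<dots> \<ge> 2 powr 3" using rho_nn by (intro powr_mono) auto
    finally show ?thesis by simp
  qed
  have sp: "w1 powr \<rho> > 0" using s_pos by simp
  have "\<exists>T\<ge>T1. \<forall>t\<ge>T. moment \<mu> (c t) \<le> K"
  proof (rule eventually_le_ode[where f'="Dv \<mu>" and \<delta>="R * (MM+wm) / 2"])
    show "((\<lambda>t. moment \<mu> (c t)) has_real_derivative Dv \<mu> t) (at t)" if "t \<ge> T1" for t
      using mom_deriv(1)[of \<mu> t] that T1 mu1 by simp
    show "Dv \<mu> t \<le> - (R * (MM+wm) / 2)" if t: "t \<ge> T1" "K \<le> moment \<mu> (c t)" for t
    proof -
      have tp: "t > 0" using t T1 by simp
      define m where "m = moment \<mu> (c t)"
      define m1 where "m1 = moment 1 (c t)"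
      define Q where "Q = \<ss> \<mu> + EE lmc m1 - Dv \<mu> t"
      have m0: "m \<ge> 0" unfolding m_def using mom_nn tp by simp
      have a1: "(1-lmc)*R*m \<le> Q" unfolding m_def Q_def m1_def using mu_est(1)[OF tp lmc(1)] lmc by simp
      have lR: "(1-lmc)*R > 0" using lmc R_pos by simp
      have Q0: "Q \<ge> 0" using a1 mult_nonneg_nonneg[OF less_imp_le[OF lR] m0] by linarith
      have a2: "(1-lmc)*R*m powr (1+\<rho>) \<le> m1 powr \<rho> * Q"
        unfolding m_def Q_def m1_def using mu_est(2)[OF tp lmc(1)] lmc by simp
      have m1b: "m1 powr \<rho> \<le> 4/3 * w1 powr \<rho>"
      proof -
        have "m1 powr \<rho> \<le> (ec * w1) powr \<rho>"
          unfolding m1_def using T1(2)[OF t(1)] mom_nn tp rho_nn by (intro powr_mono2) auto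
        also have "\<dots> = ec powr \<rho> * w1 powr \<rho>" by (simp add: powr_mult)
        also have "\<dots> \<le> 4/3 * w1 powr \<rho>" using ec by (intro mult_right_mono) auto
        finally show ?thesis .
      qed
      have "K powr (1+\<rho>) \<le> m powr (1+\<rho>)" using t(2) K0 r0 unfolding m_def by (intro powr_mono2) auto
      then have "(1-lmc)*R*K powr (1+\<rho>) \<le> (1-lmc)*R*m powr (1+\<rho>)" using lR by (intro mult_left_mono) auto
      also have "\<dots> \<le> m1 powr \<rho> * Q" by (rule a2)
      also have "\<dots> \<le> 4/3 * w1 powr \<rho> * Q" using m1b Q0 by (intro mult_right_mono) auto
      finally have b1: "(1-lmc)*R*K powr (1+\<rho>) \<le> 4/3 * w1 powr \<rho> * Q" .
      have eK: "(1-lmc)*R*K powr (1+\<rho>) = w1 powr \<rho> * (((1-lmc)*R) * (2 powr (1+\<rho>) * 2 powr (2+\<rho>)) * (MM + wm))"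
        unfolding KZ Z_def by (simp only: ac_simps)
      have "w1 powr \<rho> * (((1-lmc)*R) * 8 * (MM + wm)) \<le> w1 powr \<rho> * (((1-lmc)*R) * (2 powr (1+\<rho>) * 2 powr (2+\<rho>)) * (MM + wm))"
        using p2 lR Kp sp by (intro mult_left_mono mult_right_mono) auto
      also have "\<dots> \<le> w1 powr \<rho> * (4/3 * Q)" using b1 unfolding eK by (simp only: ac_simps)
      finally have b2: "((1-lmc)*R) * 8 * (MM + wm) \<le> 4/3 * Q" using sp by (rule mult_left_le_imp_le)
      have "3/2 \<le> (1-lmc)*6" using lmc by simp
      then have "3/2 * (R*(MM+wm)) \<le> ((1-lmc)*6) * (R*(MM+wm))"
        using R_pos Kp by (intro mult_right_mono) auto
      also have "\<dots> = 3/4 * (((1-lmc)*R) * 8 * (MM + wm))" by (simp only: ac_simps)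
      finally have b3: "3/2 * (R*(MM+wm)) \<le> Q" using b2 by linarith
      have "EE lmc m1 \<le> R * MM" unfolding m1_def using EE_m1[OF tp T1(2)[OF t(1)]] .
      moreover have "R*(MM+wm) = R*MM + R*wm" by (rule distrib_left)
      ultimately show ?thesis using b3 ss_mu unfolding Q_def by linarith
    qed
    show "R * (MM+wm) / 2 > 0" using R_pos Kp by simp
  qed
  then show ?thesis using T1 unfolding K_def Z_def by (meson order_trans)
qed


lemma main_loc:
  shows "let \<rho> = \<gamma> / (\<mu> - 1);
             p = (\<mu> + \<gamma> - 1) / (1 + \<gamma> - \<alpha> - \<beta>);
             q = p / (p - 1);
             Ah = A / R; s1 = \<ss> 1 / R; s\<mu> = \<ss> \<mu> / R
         in \<exists>T>0. \<forall>t\<ge>T.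
              moment \<mu> (c t) \<le> 2 * ((2 powr (2 + \<rho>) * (2 powr \<mu> * \<mu>) powr p * q powr (1 - p) / p)
                                    * Ah powr p * s1 powr (1 + p + \<rho>)
                                  + 2 powr (2 + \<rho>) * s\<mu> * s1 powr \<rho>) powr (1 / (1 + \<rho>))
            \<and> moment \<mu> (c t) \<le> 4 * ((2 powr \<mu> * \<mu>) powr p * q powr (1 - p) / p
                                    * Ah powr p * s1 powr (1 + p) + s\<mu>)"
proof -
  obtain T1 where T1: "T1 \<ge> 1" "\<And>t. t \<ge> T1 \<Longrightarrow> moment \<mu> (c t) \<le> 2 * (2 powr (2+\<rho>) * w1 powr \<rho> * (MM + wm)) powr (1/(1+\<rho>))"
    using mu_eventually1 by blast
  obtain T2 where T2: "T2 \<ge> 1" "\<And>t. t \<ge> T2 \<Longrightarrow> moment \<mu> (c t) \<le> 4*(MM + wm)"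
    using mu_eventually2 by blast
  have e1: "(2 powr (2 + \<rho>) * (2 powr \<mu> * \<mu>) powr pp * qq powr (1 - pp) / pp) * Ah powr pp * w1 powr (1 + pp + \<rho>)
      + 2 powr (2 + \<rho>) * wm * w1 powr \<rho> = 2 powr (2+\<rho>) * w1 powr \<rho> * (MM + wm)"
  proof -
    have "w1 powr (1 + pp + \<rho>) = w1 powr (1 + pp) * w1 powr \<rho>" by (simp add: powr_add)
    then show ?thesis unfolding MM_def Kc_def by (simp add: algebra_simps)
  qed
  have e2: "(2 powr \<mu> * \<mu>) powr pp * qq powr (1 - pp) / pp * Ah powr pp * w1 powr (1 + pp) + wm = MM + wm"
    unfolding MM_def Kc_def by simp
  have "\<exists>T>0. \<forall>t\<ge>T.
              moment \<mu> (c t) \<le> 2 * ((2 powr (2 + \<rho>) * (2 powr \<mu> * \<mu>) powr pp * qq powr (1 - pp) / pp)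
                                    * Ah powr pp * w1 powr (1 + pp + \<rho>)
                                  + 2 powr (2 + \<rho>) * wm * w1 powr \<rho>) powr (1 / (1 + \<rho>))
            \<and> moment \<mu> (c t) \<le> 4 * ((2 powr \<mu> * \<mu>) powr pp * qq powr (1 - pp) / pp
                                    * Ah powr pp * w1 powr (1 + pp) + wm)"
    unfolding e1 e2 using T1 T2 by (intro exI[of _ "max T1 T2"]) auto
  then show ?thesis unfolding Let_def \<rho>_def pp_def qq_def Ah_def w1_def wm_def .
qed

end

theorem mainTheorem8:
  fixes a :: "nat \<Rightarrow> nat \<Rightarrow> real" and r s cin :: "nat \<Rightarrow> real"
    and c :: "real \<Rightarrow> nat \<Rightarrow> real"
    and A R \<alpha> \<beta> \<gamma> \<mu> :: real and \<ss> :: "real \<Rightarrow> real"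
  assumes A_pos: "A > 0" and \<alpha>\<beta>: "0 \<le> \<alpha>" "\<alpha> \<le> \<beta>" "\<beta> \<le> 1"
    and a_sym: "\<And>k l. k \<ge> 1 \<Longrightarrow> l \<ge> 1 \<Longrightarrow> a k l = a l k"
    and a_nonneg: "\<And>k l. k \<ge> 1 \<Longrightarrow> l \<ge> 1 \<Longrightarrow> 0 \<le> a k l"
    and a_bound: "\<And>k l. k \<ge> 1 \<Longrightarrow> l \<ge> 1 \<Longrightarrow>
        a k l \<le> A * (real k powr \<alpha> * real l powr \<beta> + real k powr \<beta> * real l powr \<alpha>)"
    and R_pos: "R > 0" and \<gamma>: "\<gamma> > max 0 (\<alpha> + \<beta> - 1)"
    and r_bound: "\<And>k. k \<ge> 1 \<Longrightarrow> r k \<ge> R * real k powr \<gamma>"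
    and s_nonneg: "\<And>k. k \<ge> 1 \<Longrightarrow> s k \<ge> 0"
    and s_mom: "\<And>\<nu>. \<nu> \<ge> 0 \<Longrightarrow> \<ss> \<nu> > 0 \<and>
        (\<lambda>k. real k powr \<nu> * s k) summable_on {1..} \<and>
        (\<Sum>\<^sub>\<infinity>k\<in>{1..}. real k powr \<nu> * s k) \<le> \<ss> \<nu>"
    and cin: "ell1 1 cin"
    and sol: "global_solution a s r cin c"
    and \<mu>: "\<mu> > max (2 - \<alpha> - \<beta>) 1"
  shows "let \<rho> = \<gamma> / (\<mu> - 1);
             p = (\<mu> + \<gamma> - 1) / (1 + \<gamma> - \<alpha> - \<beta>);
             q = p / (p - 1);
             Ah = A / R; s1 = \<ss> 1 / R; s\<mu> = \<ss> \<mu> / R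
         in \<exists>T>0. \<forall>t\<ge>T.
              moment \<mu> (c t) \<le> 2 * ((2 powr (2 + \<rho>) * (2 powr \<mu> * \<mu>) powr p * q powr (1 - p) / p)
                                    * Ah powr p * s1 powr (1 + p + \<rho>)
                                  + 2 powr (2 + \<rho>) * s\<mu> * s1 powr \<rho>) powr (1 / (1 + \<rho>))
            \<and> moment \<mu> (c t) \<le> 4 * ((2 powr \<mu> * \<mu>) powr p * q powr (1 - p) / p
                                    * Ah powr p * s1 powr (1 + p) + s\<mu>)"
proof -
  interpret setting a r s cin c A R \<alpha> \<beta> \<gamma> \<mu> \<ss>
    by unfold_locales (use A_pos \<alpha>\<beta> a_sym a_nonneg a_bound R_pos \<gamma> r_bound s_nonneg s_mom sol \<mu> in blast)+
  show ?thesis by (rule main_loc)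
qed

end
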